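(* Let $d\ge2$, $L\ge2$, $\sigma>0$, $\lambda>0$, $\gamma>0$, let $\mu_0^\star,\mu_1^\star\in\mathbb{S}^{d-1}$ be orthonormal, and let the rows of $\mathbb{X}$ be i.i.d. with law $\frac12\mathcal{N}(\mu_0^\star,\sigma^2I_d)+\frac12\mathcal{N}(\mu_1^\star,\sigma^2I_d)$. If the projected gradient descent iteration is initialized at $(\mu_0^0,\mu_1^0)\in\mathcal{M}$, then $\kappa_0^k=\langle\mu_0^k,\mu_0^\star\rangle$, $\kappa_1^k=\langle\mu_1^k,\mu_1^\star\rangle$ satisfy $(\kappa_0^{k+1},\kappa_1^{k+1})=\varphi(\kappa_0^k,\kappa_1^k)$ for all $k$, where $\varphi:[-1,1]^2\to[-1,1]^2$ is $$\varphi(\kappa_0,\kappa_1)=\left(\frac{\kappa_0-\gamma\,\partial_{\kappa_0}\mathcal{R}^<(\kappa_0,\kappa_1)(1-\kappa_0^2)}{\sqrt{1+\gamma^2(\partial_{\kappa_0}\mathcal{R}^<(\kappa_0,\kappa_1))^2(1-\kappa_0^2)}},\ \frac{\kappa_1-\gamma\,\partial_{\kappa_1}\mathcal{R}^<(\kappa_0,\kappa_1)(1-\kappa_1^2)}{\sqrt{1+\gamma^2(\partial_{\kappa_1}\mathcal{R}^<(\kappa_0,\kappa_1))^2(1-\kappa_1^2)}}\right),$$ and $\mathcal{R}^<(\kappa_0,\kappa_1)=A(\kappa_0^4+\kappa_1^4)+B(\kappa_0^2+\kappa_1^2)+C\kappa_0^2\kappa_1^2+D$.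
   Context: $T^{\mathrm{lin},\mu_0,\mu_1}(\mathbb{X})_\ell=\frac{2}{L}\sum_{k=1}^L\lambda X_\ell^\top(\mu_0\mu_0^\top+\mu_1\mu_1^\top)X_kX_k$; $\mathcal{R}(\mu_0,\mu_1)=\frac1L\sum_\ell\mathbb{E}\|X_\ell-T^{\mathrm{lin},\mu_0,\mu_1}(\mathbb{X})_\ell\|_2^2$. Iteration: for $i\in\{0,1\}$, $\mu_i^{k+1}=\dfrac{\mu_i^k-\gamma(I_d-\mu_i^k(\mu_i^k)^\top)\nabla_{\mu_i}\mathcal{R}(\mu_0^k,\mu_1^k)}{\|\mu_i^k-\gamma(I_d-\mu_i^k(\mu_i^k)^\top)\nabla_{\mu_i}\mathcal{R}(\mu_0^k,\mu_1^k)\|_2}$. $\mathcal{M}=\{(\mu_0,\mu_1)\in(\mathbb{S}^{d-1})^2:\langle\mu_1^\star,\mu_0\rangle=\langle\mu_0^\star,\mu_1\rangle=\langle\mu_0,\mu_1\rangle=0\}$. With $c_1(n)=1+n\sigma^2$, $c_2(n)=1+\sigma^2(d+n)$: $A=\frac{2\lambda^2}{L^2}c_2(8)+\frac{2\lambda^2(L-1)}{L^2}c_1(5)+\frac{\lambda^2(L-1)}{L^2}c_2(4)+\frac{\lambda^2(L-1)(L-2)}{2L^2}c_1(4)$, $B=-\frac{2\lambda}{L}c_2(4)+\frac{16\lambda^2\sigma^2}{L^2}c_2(6)+\frac{8\lambda^2\sigma^2(L-1)}{L^2}c_1(6)-\frac{\lambda(L-1)}{L}c_1(4)+\frac{4\lambda^2\sigma^2(L-1)}{L^2}c_2(3)+\frac{\lambda^2\sigma^2(L-1)(L-2)}{L^2}c_1(6)$,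 $C=\frac{4\lambda^2\sigma^2(L-1)}{L^2}$, $D=c_1(d)-\frac{8\lambda\sigma^2}{L}c_2(2)+\frac{32\lambda^2\sigma^4}{L^2}c_2(4)+\frac{64\lambda^2\sigma^6(L-1)}{L^2}-\frac{8\lambda\sigma^4(L-1)}{L}+\frac{8\lambda^2\sigma^4(L-1)}{L^2}c_2(2)+\frac{8\lambda^2\sigma^6(L-1)(L-2)}{L^2}$ (so that $\mathcal{R}(\mu_0,\mu_1)=\mathcal{R}^<(\langle\mu_0^\star,\mu_0\rangle,\langle\mu_1^\star,\mu_1\rangle)$ on $\mathcal{M}$). *)

theory Defs
  imports "HOL-Probability.Probability"
begin

definition gauss_density :: "real \<Rightarrow> real^'d \<Rightarrow> real^'d \<Rightarrow> real" where
  "gauss_density s m x = (\<Prod>j\<in>UNIV. normal_density (m $ j) s (x $ j))"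

definition mixture :: "real \<Rightarrow> real^'d \<Rightarrow> real^'d \<Rightarrow> (real^'d) measure" where
  "mixture s m0 m1 =
     density lborel (\<lambda>x. ennreal (gauss_density s m0 x / 2 + gauss_density s m1 x / 2))"

definition data_law :: "nat \<Rightarrow> real \<Rightarrow> real^'d \<Rightarrow> real^'d \<Rightarrow> (nat \<Rightarrow> real^'d) measure" where
  "data_law L s m0 m1 = PiM {..<L} (\<lambda>_. mixture s m0 m1)"

definition Tlin :: "nat \<Rightarrow> real \<Rightarrow> real^'d \<Rightarrow> real^'d \<Rightarrow> (nat \<Rightarrow> real^'d) \<Rightarrow> nat \<Rightarrow> real^'d" where
  "Tlin L lam u0 u1 X l =
     (2 / real L) *\<^sub>R (\<Sum>k<L. (lam * ((X l \<bullet> u0) * (u0 \<bullet> X k) + (X l \<bullet> u1) * (u1 \<bullet> X k))) *\<^sub>R X k)"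

definition risk :: "nat \<Rightarrow> real \<Rightarrow> real \<Rightarrow> real^'d \<Rightarrow> real^'d \<Rightarrow> real^'d \<Rightarrow> real^'d \<Rightarrow> real" where
  "risk L lam s m0 m1 u0 u1 =
     (1 / real L) * (\<Sum>l<L. integral\<^sup>L (data_law L s m0 m1) (\<lambda>X. (norm (X l - Tlin L lam u0 u1 X l))\<^sup>2))"

definition grad :: "('a::real_inner \<Rightarrow> real) \<Rightarrow> 'a \<Rightarrow> 'a" where
  "grad f x = (SOME D. GDERIV f x :> D)"

definition pgd_step :: "real \<Rightarrow> real^'d \<Rightarrow> real^'d \<Rightarrow> real^'d" where
  "pgd_step g u D = (let v = u - g *\<^sub>R (D - (u \<bullet> D) *\<^sub>R u) in v /\<^sub>R norm v)"

definition c1 :: "real \<Rightarrow> real \<Rightarrow> real" where "c1 s n = 1 + n * s\<^sup>2"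
definition c2 :: "real \<Rightarrow> real \<Rightarrow> real \<Rightarrow> real" where "c2 d s n = 1 + s\<^sup>2 * (d + n)"

definition coefA :: "real \<Rightarrow> real \<Rightarrow> real \<Rightarrow> real \<Rightarrow> real" where
  "coefA d L lam s =
     2 * lam\<^sup>2 / L\<^sup>2 * c2 d s 8 + 2 * lam\<^sup>2 * (L - 1) / L\<^sup>2 * c1 s 5
     + lam\<^sup>2 * (L - 1) / L\<^sup>2 * c2 d s 4 + lam\<^sup>2 * (L - 1) * (L - 2) / (2 * L\<^sup>2) * c1 s 4"

definition coefB :: "real \<Rightarrow> real \<Rightarrow> real \<Rightarrow> real \<Rightarrow> real" where
  "coefB d L lam s =
     - 2 * lam / L * c2 d s 4 + 16 * lam\<^sup>2 * s\<^sup>2 / L\<^sup>2 * c2 d s 6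
     + 8 * lam\<^sup>2 * s\<^sup>2 * (L - 1) / L\<^sup>2 * c1 s 6 - lam * (L - 1) / L * c1 s 4
     + 4 * lam\<^sup>2 * s\<^sup>2 * (L - 1) / L\<^sup>2 * c2 d s 3
     + lam\<^sup>2 * s\<^sup>2 * (L - 1) * (L - 2) / L\<^sup>2 * c1 s 6"

definition coefC :: "real \<Rightarrow> real \<Rightarrow> real \<Rightarrow> real \<Rightarrow> real" where
  "coefC d L lam s = 4 * lam\<^sup>2 * s\<^sup>2 * (L - 1) / L\<^sup>2"

definition coefD :: "real \<Rightarrow> real \<Rightarrow> real \<Rightarrow> real \<Rightarrow> real" where
  "coefD d L lam s =
     c1 s d - 8 * lam * s\<^sup>2 / L * c2 d s 2 + 32 * lam\<^sup>2 * s ^ 4 / L\<^sup>2 * c2 d s 4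
     + 64 * lam\<^sup>2 * s ^ 6 * (L - 1) / L\<^sup>2 - 8 * lam * s ^ 4 * (L - 1) / L
     + 8 * lam\<^sup>2 * s ^ 4 * (L - 1) / L\<^sup>2 * c2 d s 2
     + 8 * lam\<^sup>2 * s ^ 6 * (L - 1) * (L - 2) / L\<^sup>2"

definition risk_lt :: "real \<Rightarrow> real \<Rightarrow> real \<Rightarrow> real \<Rightarrow> real \<Rightarrow> real \<Rightarrow> real" where
  "risk_lt d L lam s k0 k1 =
     coefA d L lam s * (k0 ^ 4 + k1 ^ 4) + coefB d L lam s * (k0\<^sup>2 + k1\<^sup>2)
     + coefC d L lam s * k0\<^sup>2 * k1\<^sup>2 + coefD d L lam s"

definition phi :: "real \<Rightarrow> real \<Rightarrow> real \<Rightarrow> real \<Rightarrow> real \<Rightarrow> real \<times> real \<Rightarrow> real \<times> real" where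
  "phi d L lam s g = (\<lambda>(k0, k1).
     (let p0 = deriv (\<lambda>t. risk_lt d L lam s t k1) k0;
          p1 = deriv (\<lambda>t. risk_lt d L lam s k0 t) k1
      in ((k0 - g * p0 * (1 - k0\<^sup>2)) / sqrt (1 + g\<^sup>2 * p0\<^sup>2 * (1 - k0\<^sup>2)),
          (k1 - g * p1 * (1 - k1\<^sup>2)) / sqrt (1 + g\<^sup>2 * p1\<^sup>2 * (1 - k1\<^sup>2)))))"

end

theory Submission
  imports Defs "HOL-Computational_Algebra.Polynomial"
begin

definition NM :: "real \<Rightarrow> real \<Rightarrow> real measure" where
  "NM c s = density lborel (\<lambda>x. ennreal (normal_density c s x))"

lemma sets_NM[simp, measurable_cong]: "sets (NM c s) = sets borel"
  by (simp add: NM_def)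
lemma space_NM[simp]: "space (NM c s) = UNIV"
  by (simp add: NM_def)
lemma prob_space_NM: "s > 0 \<Longrightarrow> prob_space (NM c s)"
  unfolding NM_def by (rule prob_space_normal_density)

lemma integral_NM:
  "f \<in> borel_measurable borel \<Longrightarrow> integral\<^sup>L (NM c s) f = integral\<^sup>L lborel (\<lambda>x. normal_density c s x * f x)"
  unfolding NM_def by (subst integral_density) auto

lemma integrable_NM:
  "f \<in> borel_measurable borel \<Longrightarrow> integrable (NM c s) f \<longleftrightarrow> integrable lborel (\<lambda>x. normal_density c s x * f x)"
  unfolding NM_def by (subst integrable_density) auto

lemma NM_int_pow: "s > 0 \<Longrightarrow> integrable (NM c s) (\<lambda>x. (x - c) ^ k)"
  by (subst integrable_NM) (auto intro: integrable_normal_moment)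

lemma NM_int_abspow: "s > 0 \<Longrightarrow> integrable (NM c s) (\<lambda>x. \<bar>x - c\<bar> ^ k)"
  by (subst integrable_NM) (auto intro: integrable_normal_moment_abs)

lemma NM_int_pow': "s > 0 \<Longrightarrow> integrable (NM c s) (\<lambda>x. (x - c) * (x - c) ^ k)"
  using NM_int_pow[of s c "Suc k"] by simp

lemma NM_mom_odd: assumes s: "s > 0" shows "integral\<^sup>L (NM c s) (\<lambda>x. (x - c) ^ (2 * k + 1)) = 0"
proof -
  have "(LBINT x. normal_density c s x * (x - c) ^ (2 * k + 1)) = 0"
    by (rule integral_normal_moment_odd[OF s])
  then show ?thesis by (subst integral_NM) auto
qed

lemma NM_mom_even: assumes s: "s > 0" shows "integral\<^sup>L (NM c s) (\<lambda>x. (x - c) ^ (2 * k)) = fact (2 * k) / ((2 / s\<^sup>2)^k * fact k)"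
proof -
  have "(LBINT x. normal_density c s x * (x - c) ^ (2 * k)) = fact (2 * k) / ((2 / s\<^sup>2)^k * fact k)"
    by (rule integral_normal_moment_even[OF s])
  then show ?thesis by (subst integral_NM) auto
qed

lemma NM_mom_rec:
  assumes s: "s > 0"
  shows "integral\<^sup>L (NM c s) (\<lambda>x. (x - c) ^ Suc (Suc k)) = s\<^sup>2 * real (Suc k) * integral\<^sup>L (NM c s) (\<lambda>x. (x - c) ^ k)"
proof (cases "even k")
  case True
  then obtain m where k: "k = 2 * m" by auto
  have e: "Suc (Suc k) = 2 * Suc m" using k by simp
  show ?thesis unfolding e using s
  proof (simp only: NM_mom_even k)
    have f1: "fact (2 * Suc m) = real ((2*m+2)*(2*m+1)) * (fact (2 * m) :: real)"
      by (simp add: fact_Suc algebra_simps)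
    have f2: "fact (Suc m) = real (m+1) * (fact m :: real)" by (simp add: fact_Suc)
    have f3: "(2 / s\<^sup>2) ^ Suc m = (2 / s\<^sup>2) * (2 / s\<^sup>2) ^ m" by simp
    have p: "(2 / s\<^sup>2) ^ m > 0" using s by simp
    have q: "(fact m :: real) > 0" by simp
    show "fact (2 * Suc m) / ((2 / s\<^sup>2) ^ Suc m * fact (Suc m)) =
      s\<^sup>2 * real (Suc (2 * m)) * (fact (2 * m) / ((2 / s\<^sup>2) ^ m * fact m))"
      unfolding f1 f2 f3 using s p q by (simp add: divide_simps) (simp add: algebra_simps)
  qed
next
  case False
  then obtain m where k: "k = 2 * m + 1" using oddE by blast
  have e: "Suc (Suc k) = 2 * Suc m + 1" using k by simp
  have l: "integral\<^sup>L (NM c s) (\<lambda>x. (x - c) ^ Suc (Suc k)) = 0"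
    by (simp only: e NM_mom_odd[OF s])
  have r: "integral\<^sup>L (NM c s) (\<lambda>x. (x - c) ^ k) = 0"
    by (simp only: k NM_mom_odd[OF s])
  show ?thesis by (simp only: l r mult_zero_right)
qed

lemma NM_mom_1: "s > 0 \<Longrightarrow> integral\<^sup>L (NM c s) (\<lambda>x. (x - c) ^ Suc 0) = 0"
  using NM_mom_odd[of s c 0] by simp

lemma poly_altdef_le: fixes p :: "real poly" assumes "degree p \<le> n" shows "poly p x = (\<Sum>i\<le>n. coeff p i * x ^ i)"
proof -
  have "(\<Sum>i\<le>degree p. coeff p i * x ^ i) = (\<Sum>i\<le>n. coeff p i * x ^ i)"
    by (rule sum.mono_neutral_left) (use assms in \<open>auto simp: coeff_eq_0\<close>)
  then show ?thesis by (simp add: poly_altdef)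
qed

lemma NM_int_poly: "s > 0 \<Longrightarrow> integrable (NM c s) (\<lambda>x. poly p (x - c))"
  unfolding poly_altdef by (auto intro!: NM_int_pow)

lemma NM_stein_poly:
  assumes s: "s > 0"
  shows "integral\<^sup>L (NM c s) (\<lambda>x. (x - c) * poly p (x - c)) = s\<^sup>2 * integral\<^sup>L (NM c s) (\<lambda>x. poly (pderiv p) (x - c))"
proof -
  define D where "D = degree p"
  define M where "M k = integral\<^sup>L (NM c s) (\<lambda>x. (x - c) ^ k)" for k
  have M1: "M (Suc 0) = 0" using NM_mom_1[OF s] by (simp add: M_def)
  have M2: "M (Suc (Suc k)) = s\<^sup>2 * real (Suc k) * M k" for k
    using NM_mom_rec[OF s] by (simp add: M_def)
  have "(\<lambda>x. (x - c) * poly p (x - c)) = (\<lambda>x. \<Sum>i\<le>Suc D. coeff p i * (x - c) ^ Suc i)"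
    by (subst poly_altdef_le[of p "Suc D"]) (auto simp: D_def sum_distrib_left algebra_simps)
  then have "integral\<^sup>L (NM c s) (\<lambda>x. (x - c) * poly p (x - c)) = (\<Sum>i\<le>Suc D. coeff p i * M (Suc i))"
    by (simp del: sum.atMost_Suc add: M_def integral_sum NM_int_pow NM_int_pow' s)
  also have "\<dots> = (\<Sum>i\<le>D. coeff p (Suc i) * M (Suc (Suc i)))"
    by (subst sum.atMost_Suc_shift) (simp add: M1)
  also have "\<dots> = s\<^sup>2 * (\<Sum>i\<le>D. coeff (pderiv p) i * M i)"
    by (simp add: M2 coeff_pderiv sum_distrib_left algebra_simps)
  also have "(\<Sum>i\<le>D. coeff (pderiv p) i * M i) = integral\<^sup>L (NM c s) (\<lambda>x. poly (pderiv p) (x - c))"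
  proof -
    have dd: "degree (pderiv p) \<le> D" unfolding D_def by (simp add: degree_pderiv)
    show ?thesis
      by (subst poly_altdef_le[OF dd]) (simp add: M_def integral_sum NM_int_pow s)
  qed
  finally show ?thesis .
qed

lemma NM_stein_prod:
  assumes s: "s > 0" and R: "finite R"
  shows "integral\<^sup>L (NM c s) (\<lambda>x. (x - c) * (\<Prod>r\<in>R. a r * x + b r))
       = s\<^sup>2 * (\<Sum>t\<in>R. a t * integral\<^sup>L (NM c s) (\<lambda>x. \<Prod>r\<in>R-{t}. a r * x + b r))"
proof -
  define f where "f r = [: a r * c + b r, a r :]" for r
  have pf: "poly (f r) (x - c) = a r * x + b r" for r x
    by (simp add: f_def algebra_simps)
  have pp: "(\<Prod>r\<in>A. a r * x + b r) = poly (\<Prod>r\<in>A. f r) (x - c)" for A x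
    by (simp add: poly_prod pf)
  have pd: "pderiv (f r) = [: a r :]" for r
    by (simp add: f_def pderiv_pCons)
  have "integral\<^sup>L (NM c s) (\<lambda>x. (x - c) * (\<Prod>r\<in>R. a r * x + b r))
      = s\<^sup>2 * integral\<^sup>L (NM c s) (\<lambda>x. poly (pderiv (\<Prod>r\<in>R. f r)) (x - c))"
    unfolding pp by (rule NM_stein_poly[OF s])
  also have "(\<lambda>x. poly (pderiv (\<Prod>r\<in>R. f r)) (x - c)) = (\<lambda>x. \<Sum>t\<in>R. a t * poly (\<Prod>r\<in>R-{t}. f r) (x - c))"
    by (simp add: pderiv_prod poly_sum pd mult.commute)
  also have "integral\<^sup>L (NM c s) \<dots> = (\<Sum>t\<in>R. a t * integral\<^sup>L (NM c s) (\<lambda>x. poly (\<Prod>r\<in>R-{t}. f r) (x - c)))"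
    by (simp add: integral_sum NM_int_poly s)
  finally show ?thesis by (simp add: pp)
qed

lemma NM_int_prod: assumes s: "s > 0" shows "integrable (NM c s) (\<lambda>x. (\<Prod>r\<in>R. a r * x + b r))"
proof -
  define f where "f r = [: a r * c + b r, a r :]" for r
  have "(\<Prod>r\<in>R. a r * x + b r) = poly (\<Prod>r\<in>R. f r) (x - c)" for x
    by (simp add: poly_prod f_def algebra_simps)
  then show ?thesis by (simp add: NM_int_poly s)
qed

lemma NM_int_xprod: assumes s: "s > 0" shows "integrable (NM c s) (\<lambda>x. (x - c) * (\<Prod>r\<in>R. a r * x + b r))"
proof -
  define f where "f r = [: a r * c + b r, a r :]" for r
  have eq: "(\<lambda>x. (x - c) * (\<Prod>r\<in>R. a r * x + b r)) = (\<lambda>x. poly (pCons 0 (\<Prod>r\<in>R. f r)) (x - c))"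
    by (rule ext) (simp add: poly_prod f_def algebra_simps)
  show ?thesis unfolding eq by (rule NM_int_poly[OF s])
qed

lemma NM_int_1pow: assumes s: "s > 0" shows "integrable (NM c s) (\<lambda>t. (1 + \<bar>t\<bar>) ^ n)"
proof (rule Bochner_Integration.integrable_bound)
  show "integrable (NM c s) (\<lambda>t. \<Sum>k\<le>n. of_nat (n choose k) * \<bar>t - c\<bar> ^ k * (1 + \<bar>c\<bar>) ^ (n - k))"
  proof (intro Bochner_Integration.integrable_sum)
    fix k
    have "integrable (NM c s) (\<lambda>t. \<bar>t - c\<bar> ^ k)" by (rule NM_int_abspow[OF s])
    then show "integrable (NM c s) (\<lambda>t. of_nat (n choose k) * \<bar>t - c\<bar> ^ k * (1 + \<bar>c\<bar>) ^ (n - k))"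
      by (intro integrable_mult_left integrable_mult_right)
  qed
  show "(\<lambda>t. (1 + \<bar>t\<bar>) ^ n) \<in> borel_measurable (NM c s)" by simp
  show "AE t in NM c s. norm ((1 + \<bar>t\<bar>) ^ n) \<le> norm (\<Sum>k\<le>n. of_nat (n choose k) * \<bar>t - c\<bar> ^ k * (1 + \<bar>c\<bar>) ^ (n - k))"
  proof (intro AE_I2)
    fix t
    have "(1 + \<bar>t\<bar>) ^ n \<le> (\<bar>t - c\<bar> + (1 + \<bar>c\<bar>)) ^ n"
      by (intro power_mono) auto
    also have "\<dots> = (\<Sum>k\<le>n. of_nat (n choose k) * \<bar>t - c\<bar> ^ k * (1 + \<bar>c\<bar>) ^ (n - k))"
      by (rule binomial_ring)
    finally show "norm ((1 + \<bar>t\<bar>) ^ n) \<le> norm (\<Sum>k\<le>n. of_nat (n choose k) * \<bar>t - c\<bar> ^ k * (1 + \<bar>c\<bar>) ^ (n - k))"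
      by (simp add: abs_of_nonneg sum_nonneg)
  qed
qed

definition PN :: "'i set \<Rightarrow> ('i \<Rightarrow> real) \<Rightarrow> real \<Rightarrow> ('i \<Rightarrow> real) measure" where
  "PN I c s = PiM I (\<lambda>i. NM (c i) s)"

lemma psf_NM: "s > 0 \<Longrightarrow> product_sigma_finite (\<lambda>i. NM (c i) s)"
  unfolding product_sigma_finite_def
  using prob_space_NM prob_space_imp_sigma_finite by blast

lemma prob_space_PN: "s > 0 \<Longrightarrow> prob_space (PN I c s)"
  unfolding PN_def by (intro prob_space_PiM prob_space_NM)

lemma PN_comp_meas: "i \<in> I \<Longrightarrow> (\<lambda>y. y i) \<in> borel_measurable (PN I c s)"
  unfolding PN_def
  using measurable_component_singleton[of i I "\<lambda>i. NM (c i) s"]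
  by (simp cong: measurable_cong_sets)

inductive polyf :: "'i set \<Rightarrow> (('i \<Rightarrow> real) \<Rightarrow> real) \<Rightarrow> bool" for I where
  pf_const: "polyf I (\<lambda>y. a)"
| pf_coord: "i \<in> I \<Longrightarrow> polyf I (\<lambda>y. y i)"
| pf_add: "polyf I f \<Longrightarrow> polyf I g \<Longrightarrow> polyf I (\<lambda>y. f y + g y)"
| pf_mult: "polyf I f \<Longrightarrow> polyf I g \<Longrightarrow> polyf I (\<lambda>y. f y * g y)"

lemma pf_diff: "polyf I f \<Longrightarrow> polyf I g \<Longrightarrow> polyf I (\<lambda>y. f y - g y)"
proof -
  assume f: "polyf I f" and g: "polyf I g"
  have "polyf I (\<lambda>y. f y + (-1) * g y)" by (intro pf_add pf_mult pf_const f g)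
  then show ?thesis by simp
qed

lemma pf_sum: "finite A \<Longrightarrow> (\<And>a. a \<in> A \<Longrightarrow> polyf I (f a)) \<Longrightarrow> polyf I (\<lambda>y. \<Sum>a\<in>A. f a y)"
proof (induction A rule: finite_induct)
  case empty then show ?case using pf_const[of I 0] by simp
next
  case (insert x F) then show ?case by (simp add: pf_add)
qed

lemma pf_prod: "finite A \<Longrightarrow> (\<And>a. a \<in> A \<Longrightarrow> polyf I (f a)) \<Longrightarrow> polyf I (\<lambda>y. \<Prod>a\<in>A. f a y)"
proof (induction A rule: finite_induct)
  case empty then show ?case using pf_const[of I 1] by simp
next
  case (insert x F) then show ?case by (simp add: pf_mult)
qed

lemma pf_meas: "polyf I f \<Longrightarrow> f \<in> borel_measurable (PN I c s)"
  by (induction rule: polyf.induct) (auto intro: PN_comp_meas)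

lemma prod_1abs_ge: "finite I \<Longrightarrow> 1 \<le> (\<Prod>i\<in>I. 1 + \<bar>y i\<bar> :: real)"
  by (rule prod_ge_1) auto

lemma coord_le_prod: assumes "finite I" "i \<in> I" shows "\<bar>y i\<bar> \<le> (\<Prod>j\<in>I. 1 + \<bar>y j\<bar> :: real)"
proof -
  have "(\<Prod>j\<in>I. 1 + \<bar>y j\<bar>) = (1 + \<bar>y i\<bar>) * (\<Prod>j\<in>I-{i}. 1 + \<bar>y j\<bar>)"
    using assms by (simp add: prod.remove)
  moreover have "1 \<le> (\<Prod>j\<in>I-{i}. 1 + \<bar>y j\<bar>)" using assms by (intro prod_1abs_ge) auto
  ultimately show ?thesis
    by (smt (verit) mult_cancel_left1 mult_left_mono)
qed

lemma pf_bound: "polyf I f \<Longrightarrow> finite I \<Longrightarrow> \<exists>C n. \<forall>y. \<bar>f y\<bar> \<le> C * (\<Prod>j\<in>I. 1 + \<bar>y j\<bar>) ^ n"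
proof (induction rule: polyf.induct)
  case (pf_const a)
  then show ?case by (intro exI[of _ "\<bar>a\<bar>"] exI[of _ 0]) simp
next
  case (pf_coord i)
  then show ?case by (intro exI[of _ 1] exI[of _ 1]) (simp add: coord_le_prod)
next
  case (pf_add f g)
  then obtain C1 n1 C2 n2 where 1: "\<forall>y. \<bar>f y\<bar> \<le> C1 * (\<Prod>j\<in>I. 1 + \<bar>y j\<bar>) ^ n1"
    and 2: "\<forall>y. \<bar>g y\<bar> \<le> C2 * (\<Prod>j\<in>I. 1 + \<bar>y j\<bar>) ^ n2" by blast
  show ?case
  proof (intro exI[of _ "C1 + C2"] exI[of _ "n1 + n2"] allI)
    fix y :: "'a \<Rightarrow> real"
    define P where "P = (\<Prod>j\<in>I. 1 + \<bar>y j\<bar>)"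
    have P1: "1 \<le> P" unfolding P_def using pf_add by (intro prod_1abs_ge)
    have C1: "0 \<le> C1"
    proof -
      have pp: "0 < P ^ n1" using P1 by simp
      have "0 \<le> C1 * P ^ n1" using 1[rule_format, of y] unfolding P_def[symmetric]
        by (meson abs_ge_zero order_trans)
      then show ?thesis using pp by (simp add: zero_le_mult_iff)
    qed
    have C2: "0 \<le> C2"
    proof -
      have pp: "0 < P ^ n2" using P1 by simp
      have "0 \<le> C2 * P ^ n2" using 2[rule_format, of y] unfolding P_def[symmetric]
        by (meson abs_ge_zero order_trans)
      then show ?thesis using pp by (simp add: zero_le_mult_iff)
    qed
    have a: "P ^ n1 \<le> P ^ (n1 + n2)" using P1 by (intro power_increasing) auto
    have b: "P ^ n2 \<le> P ^ (n1 + n2)" using P1 by (intro power_increasing) auto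
    have "\<bar>f y + g y\<bar> \<le> C1 * P ^ n1 + C2 * P ^ n2"
      using 1[rule_format, of y] 2[rule_format, of y] unfolding P_def by linarith
    also have "\<dots> \<le> C1 * P ^ (n1 + n2) + C2 * P ^ (n1 + n2)"
      using a b C1 C2 by (intro add_mono mult_left_mono) auto
    finally show "\<bar>f y + g y\<bar> \<le> (C1 + C2) * (\<Prod>j\<in>I. 1 + \<bar>y j\<bar>) ^ (n1 + n2)"
      unfolding P_def by (simp add: algebra_simps)
  qed
next
  case (pf_mult f g)
  then obtain C1 n1 C2 n2 where 1: "\<forall>y. \<bar>f y\<bar> \<le> C1 * (\<Prod>j\<in>I. 1 + \<bar>y j\<bar>) ^ n1"
    and 2: "\<forall>y. \<bar>g y\<bar> \<le> C2 * (\<Prod>j\<in>I. 1 + \<bar>y j\<bar>) ^ n2" by blast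
  show ?case
  proof (intro exI[of _ "C1 * C2"] exI[of _ "n1 + n2"] allI)
    fix y :: "'a \<Rightarrow> real"
    have "\<bar>f y * g y\<bar> = \<bar>f y\<bar> * \<bar>g y\<bar>" by (simp add: abs_mult)
    also have "\<dots> \<le> (C1 * (\<Prod>j\<in>I. 1 + \<bar>y j\<bar>) ^ n1) * (C2 * (\<Prod>j\<in>I. 1 + \<bar>y j\<bar>) ^ n2)"
    proof (rule mult_mono)
      show "\<bar>f y\<bar> \<le> C1 * (\<Prod>j\<in>I. 1 + \<bar>y j\<bar>) ^ n1" using 1 by blast
      show "\<bar>g y\<bar> \<le> C2 * (\<Prod>j\<in>I. 1 + \<bar>y j\<bar>) ^ n2" using 2 by blast
      show "0 \<le> C1 * (\<Prod>j\<in>I. 1 + \<bar>y j\<bar>) ^ n1" using 1 by (meson abs_ge_zero order_trans)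
    qed simp
    finally show "\<bar>f y * g y\<bar> \<le> C1 * C2 * (\<Prod>j\<in>I. 1 + \<bar>y j\<bar>) ^ (n1 + n2)"
      by (simp add: power_add algebra_simps)
  qed
qed

lemma pf_integrable:
  assumes pf: "polyf I f" and I: "finite I" and s: "s > 0"
  shows "integrable (PN I c s) f"
proof -
  obtain C n where b: "\<forall>y. \<bar>f y\<bar> \<le> C * (\<Prod>j\<in>I. 1 + \<bar>y j\<bar>) ^ n"
    using pf_bound[OF pf I] by blast
  interpret product_sigma_finite "\<lambda>i. NM (c i) s" using psf_NM[OF s] .
  have "integrable (PN I c s) (\<lambda>y. \<Prod>j\<in>I. (1 + \<bar>y j\<bar>) ^ n)"
    unfolding PN_def by (intro product_integrable_prod I NM_int_1pow s)
  then have "integrable (PN I c s) (\<lambda>y. C * (\<Prod>j\<in>I. (1 + \<bar>y j\<bar>) ^ n))" by simp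
  then show ?thesis
  proof (rule Bochner_Integration.integrable_bound)
    show "f \<in> borel_measurable (PN I c s)" using pf by (rule pf_meas)
    show "AE y in PN I c s. norm (f y) \<le> norm (C * (\<Prod>j\<in>I. (1 + \<bar>y j\<bar>) ^ n))"
    proof (intro AE_I2)
      fix y
      have "\<bar>f y\<bar> \<le> C * (\<Prod>j\<in>I. (1 + \<bar>y j\<bar>) ^ n)" using b by (simp add: prod_power_distrib)
      then show "norm (f y) \<le> norm (C * (\<Prod>j\<in>I. (1 + \<bar>y j\<bar>) ^ n))"
        by (metis abs_ge_self order_trans real_norm_def)
    qed
  qed
qed

lemma pf_aff: "finite I \<Longrightarrow> polyf I (\<lambda>y. b + (\<Sum>i\<in>I. w i * y i))"
  by (intro pf_add pf_const pf_sum pf_mult pf_coord) auto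

lemma pf_affprod: "finite I \<Longrightarrow> finite R \<Longrightarrow> polyf I (\<lambda>y. \<Prod>r\<in>R. b r + (\<Sum>i\<in>I. w r i * y i))"
  by (intro pf_prod pf_aff) auto

lemma PN_stein:
  fixes w :: "nat \<Rightarrow> 'i \<Rightarrow> real" and b :: "nat \<Rightarrow> real"
  assumes I: "finite I" and j: "j \<in> I" and R: "finite R" and s: "s > 0"
  shows "integral\<^sup>L (PN I c s) (\<lambda>y. (y j - c j) * (\<Prod>r\<in>R. b r + (\<Sum>i\<in>I. w r i * y i)))
       = s\<^sup>2 * (\<Sum>t\<in>R. w t j * integral\<^sup>L (PN I c s) (\<lambda>y. \<Prod>r\<in>R-{t}. b r + (\<Sum>i\<in>I. w r i * y i)))"
proof -
  define F where "F A y = (\<Prod>r\<in>A. b r + (\<Sum>i\<in>I. w r i * y i))" for A y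
  define H where "H y = (y j - c j) * F R y - s\<^sup>2 * (\<Sum>t\<in>R. w t j * F (R - {t}) y)" for y
  have pfF: "polyf I (F A)" if "finite A" for A unfolding F_def using I that by (intro pf_affprod) auto
  have pfj: "polyf I (\<lambda>y. y j - c j)" using j by (intro pf_diff pf_coord pf_const)
  have intF: "integrable (PN I c s) (F A)" if "finite A" for A
    using pfF[OF that] I s by (rule pf_integrable)
  have intjF: "integrable (PN I c s) (\<lambda>y. (y j - c j) * F R y)"
    using pf_mult[OF pfj pfF[OF R]] I s by (rule pf_integrable)
  define J where "J = I - {j}"
  have IJ: "I = insert j J" and jJ: "j \<notin> J" and fJ: "finite J" using j I by (auto simp: J_def)
  interpret product_sigma_finite "\<lambda>i. NM (c i) s" using psf_NM[OF s] .
  have intH: "integrable (PN I c s) H"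
    unfolding H_def using intjF intF R by (intro Bochner_Integration.integrable_diff integrable_mult_right Bochner_Integration.integrable_sum) auto
  have inner: "integral\<^sup>L (NM (c j) s) (\<lambda>t. H (x(j := t))) = 0" for x
  proof -
    define g where "g r = b r + (\<Sum>i\<in>J. w r i * x i)" for r
    have sumeq: "(\<Sum>i\<in>I. w r i * (x(j := t)) i) = w r j * t + (\<Sum>i\<in>J. w r i * x i)" for r t
      unfolding IJ using jJ fJ by (simp add: sum.insert) (intro sum.cong; auto)
    have Feq: "F A (x(j := t)) = (\<Prod>r\<in>A. w r j * t + g r)" for A t
      unfolding F_def g_def sumeq by (simp add: algebra_simps)
    have Heq: "H (x(j := t)) = (t - c j) * (\<Prod>r\<in>R. w r j * t + g r) - s\<^sup>2 * (\<Sum>u\<in>R. w u j * (\<Prod>r\<in>R-{u}. w r j * t + g r))" for t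
      unfolding H_def Feq by simp
    show ?thesis
      unfolding Heq
      apply (subst Bochner_Integration.integral_diff)
        apply (rule NM_int_xprod[OF s])
       apply (intro integrable_mult_right Bochner_Integration.integrable_sum NM_int_prod[OF s])
      apply (subst integral_mult_right_zero)
      apply (subst Bochner_Integration.integral_sum)
       apply (intro integrable_mult_right NM_int_prod[OF s])
      apply (simp add: NM_stein_prod[OF s R])
      done
  qed
  have "integral\<^sup>L (PN I c s) H = 0"
  proof -
    have "integral\<^sup>L (PN I c s) H = (\<integral>x. (\<integral>t. H (x(j := t)) \<partial>NM (c j) s) \<partial>PiM J (\<lambda>i. NM (c i) s))"
      using intH unfolding PN_def IJ by (rule product_integral_insert[OF fJ jJ])
    also have "\<dots> = 0" by (simp add: inner)
    finally show ?thesis .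
  qed
  then show ?thesis
    unfolding H_def F_def[symmetric]
    apply (subst (asm) Bochner_Integration.integral_diff)
      apply (rule intjF)
     apply (intro integrable_mult_right Bochner_Integration.integrable_sum intF; use R in auto)
    apply (subst (asm) integral_mult_right_zero)
    apply (subst (asm) Bochner_Integration.integral_sum)
     apply (intro integrable_mult_right intF; use R in auto)
    apply simp
    done
qed

definition Gd :: "real \<Rightarrow> real^'d \<Rightarrow> (real^'d) measure" where
  "Gd s c = density lborel (\<lambda>x. ennreal (gauss_density s c x))"

definition phiB :: "(real^'d \<Rightarrow> real) \<Rightarrow> real^'d" where
  "phiB y = (\<Sum>b\<in>Basis. y b *\<^sub>R b)"

lemma Basis_vec_real: "(Basis :: (real^'d) set) = range (\<lambda>i. axis i 1)"
  by (auto simp: Basis_vec_def)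

lemma gauss_density_Basis:
  "gauss_density s c x = (\<Prod>b\<in>(Basis :: (real^'d) set). normal_density (c \<bullet> b) s (x \<bullet> b))"
proof -
  have inj: "inj (\<lambda>i::'d. axis i (1::real))" by (auto simp: inj_on_def axis_eq_axis)
  show ?thesis
    unfolding gauss_density_def Basis_vec_real
    by (subst prod.reindex[OF inj]) (simp add: inner_axis)
qed

lemma gauss_density_meas[measurable]: "(\<lambda>x. gauss_density s c x) \<in> borel_measurable borel"
  unfolding gauss_density_def by measurable

lemma phiB_inner: "b \<in> Basis \<Longrightarrow> phiB y \<bullet> b = y b"
  unfolding phiB_def by (simp add: inner_sum_left inner_Basis if_distrib cong: if_cong)

lemma phiB_meas: "phiB \<in> borel_measurable (PN (Basis::(real^'d) set) c s)"
  unfolding phiB_def by (intro borel_measurable_sum borel_measurable_scaleR PN_comp_meas borel_measurable_const) auto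

lemma psf_lborel: "product_sigma_finite (\<lambda>_::'i. lborel)"
  unfolding product_sigma_finite_def using sigma_finite_lborel by blast

lemma indicator_PiE_prod:
  assumes "y \<in> extensional I" "finite I"
  shows "(indicator (PiE I A) y :: ennreal) = (\<Prod>i\<in>I. indicator (A i) (y i))"
proof (cases "y \<in> PiE I A")
  case True then show ?thesis by (auto simp: PiE_iff)
next
  case False
  then obtain i where i: "i \<in> I" "y i \<notin> A i" using assms by (auto simp: PiE_iff)
  then have "(\<Prod>i\<in>I. indicator (A i) (y i) :: ennreal) = 0"
    using assms i by (intro prod_zero) (auto intro!: bexI[of _ i])
  then show ?thesis using False by simp
qed

lemma density_PiM_lborel:
  assumes s: "s > 0"
  shows "density (PiM (Basis::(real^'d) set) (\<lambda>_. lborel)) (\<lambda>y. \<Prod>b\<in>Basis. ennreal (normal_density (c b) s (y b)))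
       = PN Basis c s"
proof -
  interpret product_sigma_finite "\<lambda>b. NM (c b) s" using psf_NM[OF s] .
  interpret L: product_sigma_finite "\<lambda>_::real^'d. lborel" by (rule psf_lborel)
  have sets_eq: "sets (PiM (Basis::(real^'d) set) (\<lambda>_. lborel)) = sets (PiM Basis (\<lambda>b. NM (c b) s))"
    by (intro sets_PiM_cong) auto
  show ?thesis unfolding PN_def
  proof (rule PiM_eqI)
    show "finite (Basis :: (real^'d) set)" by simp
    show "sets (density (PiM (Basis::(real^'d) set) (\<lambda>_. lborel)) (\<lambda>y. \<Prod>b\<in>Basis. ennreal (normal_density (c b) s (y b))))
        = sets (PiM Basis (\<lambda>b. NM (c b) s))" using sets_eq by simp
    fix A assume A: "\<And>i. i \<in> (Basis::(real^'d) set) \<Longrightarrow> A i \<in> sets (NM (c i) s)"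
    have AP: "PiE Basis A \<in> sets (PiM (Basis::(real^'d) set) (\<lambda>_. lborel))"
      using A by (intro sets_PiM_I_finite) auto
    have "emeasure (density (PiM (Basis::(real^'d) set) (\<lambda>_. lborel)) (\<lambda>y. \<Prod>b\<in>Basis. ennreal (normal_density (c b) s (y b)))) (PiE Basis A)
        = (\<integral>\<^sup>+y. (\<Prod>b\<in>Basis. ennreal (normal_density (c b) s (y b))) * indicator (PiE Basis A) y \<partial>PiM Basis (\<lambda>_. lborel))"
      using AP by (subst emeasure_density) auto
    also have "\<dots> = (\<integral>\<^sup>+y. (\<Prod>b\<in>Basis. ennreal (normal_density (c b) s (y b)) * indicator (A b) (y b)) \<partial>PiM Basis (\<lambda>_. lborel))"
    proof (intro nn_integral_cong)
      fix y :: "real^'d \<Rightarrow> real" assume "y \<in> space (PiM (Basis::(real^'d) set) (\<lambda>_. lborel))"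
      then have "y \<in> extensional Basis" by (simp add: space_PiM PiE_iff)
      then show "(\<Prod>b\<in>Basis. ennreal (normal_density (c b) s (y b))) * indicator (PiE Basis A) y
          = (\<Prod>b\<in>Basis. ennreal (normal_density (c b) s (y b)) * indicator (A b) (y b))"
        by (simp add: indicator_PiE_prod prod.distrib)
    qed
    also have "\<dots> = (\<Prod>b\<in>Basis. \<integral>\<^sup>+t. ennreal (normal_density (c b) s t) * indicator (A b) t \<partial>lborel)"
      using A by (intro L.product_nn_integral_prod) auto
    also have "\<dots> = (\<Prod>b\<in>Basis. emeasure (NM (c b) s) (A b))"
      using A by (intro prod.cong refl) (simp add: NM_def emeasure_density)
    finally show "emeasure (density (PiM (Basis::(real^'d) set) (\<lambda>_. lborel)) (\<lambda>y. \<Prod>b\<in>Basis. ennreal (normal_density (c b) s (y b)))) (PiE Basis A)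
        = (\<Prod>b\<in>Basis. emeasure (NM (c b) s) (A b))" .
  qed
qed

lemma Gd_eq:
  assumes s: "s > 0"
  shows "Gd s (c::real^'d) = distr (PN Basis (\<lambda>b. c \<bullet> b) s) borel phiB"
proof -
  have "Gd s c = density (distr (PiM (Basis::(real^'d) set) (\<lambda>_. lborel)) borel phiB) (\<lambda>x. ennreal (gauss_density s c x))"
    unfolding Gd_def phiB_def by (subst lborel_eq) simp
  also have "\<dots> = distr (density (PiM (Basis::(real^'d) set) (\<lambda>_. lborel)) (\<lambda>y. ennreal (gauss_density s c (phiB y)))) borel phiB"
  proof (rule density_distr)
    show "(\<lambda>x. ennreal (gauss_density s c x)) \<in> borel_measurable borel" by measurable
    show "phiB \<in> measurable (PiM (Basis::(real^'d) set) (\<lambda>_. lborel)) borel"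
      unfolding phiB_def by measurable
  qed
  also have "density (PiM (Basis::(real^'d) set) (\<lambda>_. lborel)) (\<lambda>y. ennreal (gauss_density s c (phiB y)))
      = density (PiM (Basis::(real^'d) set) (\<lambda>_. lborel)) (\<lambda>y. \<Prod>b\<in>Basis. ennreal (normal_density (c \<bullet> b) s (y b)))"
    by (intro density_cong) (auto simp: gauss_density_Basis phiB_inner prod_ennreal)
  also have "\<dots> = PN Basis (\<lambda>b. c \<bullet> b) s"
    by (rule density_PiM_lborel[OF s])
  finally show ?thesis .
qed

lemma Gd_integral:
  fixes f :: "real^'d \<Rightarrow> real"
  assumes s: "s > 0" and f: "f \<in> borel_measurable borel"
  shows "integral\<^sup>L (Gd s (c::real^'d)) f = integral\<^sup>L (PN Basis (\<lambda>b. c \<bullet> b) s) (\<lambda>y. f (phiB y))"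
  unfolding Gd_eq[OF s] by (rule integral_distr) (rule phiB_meas, rule f)

lemma Gd_integrable:
  fixes f :: "real^'d \<Rightarrow> real"
  assumes s: "s > 0" and f: "f \<in> borel_measurable borel"
  shows "integrable (Gd s (c::real^'d)) f \<longleftrightarrow> integrable (PN Basis (\<lambda>b. c \<bullet> b) s) (\<lambda>y. f (phiB y))"
  unfolding Gd_eq[OF s] by (rule integrable_distr_eq) (rule phiB_meas, rule f)

inductive polyv :: "(real^'d \<Rightarrow> real) \<Rightarrow> bool" where
  pv_const: "polyv (\<lambda>x. a)"
| pv_lin: "polyv (\<lambda>x. v \<bullet> x)"
| pv_add: "polyv f \<Longrightarrow> polyv g \<Longrightarrow> polyv (\<lambda>x. f x + g x)"
| pv_mult: "polyv f \<Longrightarrow> polyv g \<Longrightarrow> polyv (\<lambda>x. f x * g x)"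

lemma pv_diff: "polyv f \<Longrightarrow> polyv g \<Longrightarrow> polyv (\<lambda>x. f x - g x)"
proof -
  assume f: "polyv f" and g: "polyv g"
  have "polyv (\<lambda>x. f x + (-1) * g x)" by (intro pv_add pv_mult pv_const f g)
  then show ?thesis by simp
qed

lemma pv_sum: "finite A \<Longrightarrow> (\<And>a. a \<in> A \<Longrightarrow> polyv (f a)) \<Longrightarrow> polyv (\<lambda>x. \<Sum>a\<in>A. f a x)"
proof (induction A rule: finite_induct)
  case empty then show ?case using pv_const[of 0] by simp
next
  case (insert x F) then show ?case by (simp add: pv_add)
qed

lemma pv_prod: "finite A \<Longrightarrow> (\<And>a. a \<in> A \<Longrightarrow> polyv (f a)) \<Longrightarrow> polyv (\<lambda>x. \<Prod>a\<in>A. f a x)"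
proof (induction A rule: finite_induct)
  case empty then show ?case using pv_const[of 1] by simp
next
  case (insert x F) then show ?case by (simp add: pv_mult)
qed

lemma pv_prod_list: "(\<And>v. v \<in> set vs \<Longrightarrow> polyv (f v)) \<Longrightarrow> polyv (\<lambda>x. prod_list (map (\<lambda>v. f v x) vs))"
proof (induction vs)
  case Nil then show ?case using pv_const[of 1] by simp
next
  case (Cons a vs) then show ?case by (simp add: pv_mult)
qed

lemma pv_norm2: "polyv (\<lambda>x::real^'d. (norm x)\<^sup>2)"
proof -
  have "polyv (\<lambda>x::real^'d. \<Sum>b\<in>Basis. (b \<bullet> x) * (b \<bullet> x))" by (intro pv_sum pv_mult pv_lin) auto
  moreover have "(\<lambda>x::real^'d. (norm x)\<^sup>2) = (\<lambda>x. \<Sum>b\<in>Basis. (b \<bullet> x) * (b \<bullet> x))"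
  proof (rule ext)
    fix x :: "real^'d"
    have "x \<bullet> x = (\<Sum>b\<in>Basis. (x \<bullet> b) * (x \<bullet> b))" by (rule euclidean_inner)
    then show "(norm x)\<^sup>2 = (\<Sum>b\<in>Basis. (b \<bullet> x) * (b \<bullet> x))" by (simp add: power2_norm_eq_inner inner_commute)
  qed
  ultimately show ?thesis by simp
qed

lemma lin_phiB: "v \<bullet> phiB y = (\<Sum>b\<in>Basis. (v \<bullet> b) * y b)"
  unfolding phiB_def by (simp add: inner_sum_right mult.commute)

lemma pv_meas: "polyv f \<Longrightarrow> f \<in> borel_measurable borel"
  by (induction rule: polyv.induct) auto

lemma pv_polyf: "polyv f \<Longrightarrow> polyf (Basis::(real^'d) set) (\<lambda>y. f (phiB y))"
proof (induction rule: polyv.induct)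
  case (pv_const a) then show ?case by (rule pf_const)
next
  case (pv_lin v) then show ?case unfolding lin_phiB by (intro pf_sum pf_mult pf_const pf_coord) auto
next
  case (pv_add f g) then show ?case by (intro pf_add pv_add.IH)
next
  case (pv_mult f g) then show ?case by (intro pf_mult pv_mult.IH)
qed

lemma pv_integrable: assumes "polyv f" "s > 0" shows "integrable (Gd s c) f"
  using assms by (subst Gd_integrable) (auto intro: pf_integrable pv_polyf pv_meas)

lemma PN_stein0:
  fixes w :: "nat \<Rightarrow> 'i \<Rightarrow> real"
  assumes I: "finite I" and j: "j \<in> I" and R: "finite R" and s: "s > 0"
  shows "integral\<^sup>L (PN I c s) (\<lambda>y. (y j - c j) * (\<Prod>r\<in>R. (\<Sum>i\<in>I. w r i * y i)))
       = s\<^sup>2 * (\<Sum>t\<in>R. w t j * integral\<^sup>L (PN I c s) (\<lambda>y. \<Prod>r\<in>R-{t}. (\<Sum>i\<in>I. w r i * y i)))"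
  using PN_stein[OF I j R s, where b = "\<lambda>_. 0" and w = w] by simp

lemma Gd_stein:
  fixes a c :: "real^'d" and v :: "nat \<Rightarrow> real^'d"
  assumes s: "s > 0" and R: "finite R"
  shows "integral\<^sup>L (Gd s c) (\<lambda>x. (a \<bullet> (x - c)) * (\<Prod>r\<in>R. v r \<bullet> x))
       = s\<^sup>2 * (\<Sum>t\<in>R. (a \<bullet> v t) * integral\<^sup>L (Gd s c) (\<lambda>x. \<Prod>r\<in>R-{t}. v r \<bullet> x))"
proof -
  let ?P = "PN (Basis::(real^'d) set) (\<lambda>b. c \<bullet> b) s"
  define Q where "Q A y = (\<Prod>r\<in>A. (\<Sum>b\<in>Basis. (v r \<bullet> b) * y b))" for A y
  have pvQ: "polyv (\<lambda>x. \<Prod>r\<in>A. v r \<bullet> x)" if "finite A" for A using that by (intro pv_prod pv_lin)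
  have Qeq: "(\<Prod>r\<in>A. v r \<bullet> phiB y) = Q A y" for A y unfolding Q_def lin_phiB ..
  have aeq: "a \<bullet> (phiB y - c) = (\<Sum>b\<in>Basis. (a \<bullet> b) * (y b - c \<bullet> b))" for y
  proof -
    have "a \<bullet> c = (\<Sum>b\<in>Basis. (a \<bullet> b) * (c \<bullet> b))" by (rule euclidean_inner)
    then show ?thesis by (simp add: inner_diff_right lin_phiB sum_subtractf algebra_simps)
  qed
  have intQ: "integrable ?P (\<lambda>y. (y b - c \<bullet> b) * Q R y)" if "b \<in> Basis" for b
    unfolding Q_def using that R s
    by (intro pf_integrable pf_mult pf_diff pf_coord pf_const pf_prod pf_sum) auto
  have "integral\<^sup>L (Gd s c) (\<lambda>x. (a \<bullet> (x - c)) * (\<Prod>r\<in>R. v r \<bullet> x))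
      = integral\<^sup>L ?P (\<lambda>y. (a \<bullet> (phiB y - c)) * Q R y)"
    using R by (subst Gd_integral[OF s]) (auto intro!: pv_meas pv_mult pv_diff pv_lin pv_const pvQ simp: Qeq)
  also have "\<dots> = integral\<^sup>L ?P (\<lambda>y. \<Sum>b\<in>Basis. (a \<bullet> b) * ((y b - c \<bullet> b) * Q R y))"
    unfolding aeq by (intro Bochner_Integration.integral_cong refl) (simp add: sum_distrib_right sum_distrib_left algebra_simps sum_subtractf)
  also have "\<dots> = (\<Sum>b\<in>Basis. (a \<bullet> b) * integral\<^sup>L ?P (\<lambda>y. (y b - c \<bullet> b) * Q R y))"
    using intQ by (simp add: Bochner_Integration.integral_sum)
  also have "\<dots> = (\<Sum>b\<in>Basis. (a \<bullet> b) * (s\<^sup>2 * (\<Sum>t\<in>R. (v t \<bullet> b) * integral\<^sup>L ?P (Q (R - {t})))))"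
    unfolding Q_def by (intro sum.cong refl arg_cong2[where f="(*)"] PN_stein0[OF _ _ R s]) auto
  also have "\<dots> = s\<^sup>2 * (\<Sum>t\<in>R. (\<Sum>b\<in>Basis. (a \<bullet> b) * (v t \<bullet> b)) * integral\<^sup>L ?P (Q (R - {t})))"
    by (simp add: sum_distrib_left sum_distrib_right algebra_simps sum.swap[of _ Basis])
  also have "\<dots> = s\<^sup>2 * (\<Sum>t\<in>R. (a \<bullet> v t) * integral\<^sup>L (Gd s c) (\<lambda>x. \<Prod>r\<in>R-{t}. v r \<bullet> x))"
  proof -
    have "integral\<^sup>L ?P (Q (R - {t})) = integral\<^sup>L (Gd s c) (\<lambda>x. \<Prod>r\<in>R-{t}. v r \<bullet> x)" for t
      using R by (subst Gd_integral[OF s]) (auto intro!: pv_meas pvQ simp: Qeq)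
    then show ?thesis by (simp add: euclidean_inner[of a, symmetric])
  qed
  finally show ?thesis .
qed

definition dl :: "nat \<Rightarrow> 'a list \<Rightarrow> 'a list" where
  "dl t xs = take t xs @ drop (Suc t) xs"

lemma dl_simps[simp]: "dl 0 (x # xs) = xs" "dl (Suc t) (x # xs) = x # dl t xs"
  by (simp_all add: dl_def)

lemma prod_list_dl:
  fixes xs :: "real list"
  assumes t: "t < length xs"
  shows "prod_list (dl t xs) = (\<Prod>i\<in>{..<length xs}-{t}. xs!i)"
proof -
  have "prod_list (xs[t := 1]) = prod_list (dl t xs)"
    using t by (simp add: upd_conv_take_nth_drop dl_def)
  moreover have "prod_list (xs[t := 1]) = (\<Prod>i\<in>{..<length xs}. xs[t := 1] ! i)"
    by (simp add: prod.list_conv_set_nth atLeast0LessThan)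
  moreover have "\<dots> = (xs[t := 1] ! t) * (\<Prod>i\<in>{..<length xs}-{t}. xs[t := 1] ! i)"
    using t by (simp add: prod.remove)
  moreover have "\<dots> = (\<Prod>i\<in>{..<length xs}-{t}. xs!i)"
    using t by simp
  ultimately show ?thesis by simp
qed

lemma prob_space_Gd: "s > 0 \<Longrightarrow> prob_space (Gd s c)"
  unfolding Gd_eq by (intro prob_space.prob_space_distr prob_space_PN phiB_meas) auto

definition gm :: "real \<Rightarrow> real^'d \<Rightarrow> (real^'d) list \<Rightarrow> real" where
  "gm s c vs = integral\<^sup>L (Gd s c) (\<lambda>x. prod_list (map (\<lambda>v. v \<bullet> x) vs))"

lemma pv_plist: "polyv (\<lambda>x. prod_list (map (\<lambda>v. v \<bullet> x) vs))"
  by (intro pv_prod_list pv_lin)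

lemma gm_Nil[simp]: "s > 0 \<Longrightarrow> gm s c [] = 1"
  by (simp add: gm_def prob_space.prob_space[OF prob_space_Gd])

lemma pv_lin_aff: "polyv (\<lambda>x. a \<bullet> (x - c))"
  using pv_diff[OF pv_lin[of a] pv_const[of "a \<bullet> c"]] by (simp add: inner_diff_right)

lemma gm_Cons:
  assumes s: "s > 0"
  shows "gm s c (a # vs) = (a \<bullet> c) * gm s c vs + s\<^sup>2 * (\<Sum>t<length vs. (a \<bullet> vs!t) * gm s c (dl t vs))"
proof -
  define n where "n = length vs"
  have P: "prod_list (map (\<lambda>v. v \<bullet> x) vs) = (\<Prod>r\<in>{..<n}. vs!r \<bullet> x)" for x
    by (simp add: prod.list_conv_set_nth atLeast0LessThan n_def)
  have Pdl: "prod_list (map (\<lambda>v. v \<bullet> x) (dl t vs)) = (\<Prod>r\<in>{..<n}-{t}. vs!r \<bullet> x)" if "t < n" for x t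
  proof -
    have "map (\<lambda>v. v \<bullet> x) (dl t vs) = dl t (map (\<lambda>v. v \<bullet> x) vs)" by (simp add: dl_def take_map drop_map)
    then show ?thesis using that prod_list_dl[of t "map (\<lambda>v. v \<bullet> x) vs"] by (simp add: n_def)
  qed
  have "gm s c (a # vs) = integral\<^sup>L (Gd s c) (\<lambda>x. (a \<bullet> (x - c)) * prod_list (map (\<lambda>v. v \<bullet> x) vs) + (a \<bullet> c) * prod_list (map (\<lambda>v. v \<bullet> x) vs))"
    unfolding gm_def by (simp add: inner_diff_right algebra_simps)
  also have "\<dots> = integral\<^sup>L (Gd s c) (\<lambda>x. (a \<bullet> (x - c)) * prod_list (map (\<lambda>v. v \<bullet> x) vs)) + (a \<bullet> c) * gm s c vs"
    unfolding gm_def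
    by (subst Bochner_Integration.integral_add) (auto intro!: pv_integrable pv_mult pv_lin_aff pv_lin pv_const pv_plist s)
  also have "integral\<^sup>L (Gd s c) (\<lambda>x. (a \<bullet> (x - c)) * prod_list (map (\<lambda>v. v \<bullet> x) vs))
      = s\<^sup>2 * (\<Sum>t<n. (a \<bullet> vs!t) * integral\<^sup>L (Gd s c) (\<lambda>x. \<Prod>r\<in>{..<n}-{t}. vs!r \<bullet> x))"
    unfolding P by (rule Gd_stein[OF s]) simp
  also have "(\<Sum>t<n. (a \<bullet> vs!t) * integral\<^sup>L (Gd s c) (\<lambda>x. \<Prod>r\<in>{..<n}-{t}. vs!r \<bullet> x))
      = (\<Sum>t<n. (a \<bullet> vs!t) * gm s c (dl t vs))"
    unfolding gm_def by (intro sum.cong refl) (simp add: Pdl)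
  finally show ?thesis by (simp add: n_def)
qed

lemma gm_lin:
  assumes s: "s > 0"
  shows "(\<Sum>b\<in>Basis. (b \<bullet> w) * gm s (c::real^'d) (b # ws)) = gm s c (w # ws)"
proof -
  have "(\<Sum>b\<in>Basis. (b \<bullet> w) * gm s c (b # ws))
      = integral\<^sup>L (Gd s c) (\<lambda>x. \<Sum>b\<in>Basis. (b \<bullet> w) * ((b \<bullet> x) * prod_list (map (\<lambda>v. v \<bullet> x) ws)))"
    unfolding gm_def
    by (subst Bochner_Integration.integral_sum) (auto intro!: pv_integrable pv_mult pv_lin pv_plist s)
  also have "\<dots> = gm s c (w # ws)"
    unfolding gm_def
  proof (intro Bochner_Integration.integral_cong refl)
    fix x :: "real^'d"
    have "w \<bullet> x = (\<Sum>b\<in>Basis. (w \<bullet> b) * (x \<bullet> b))" by (rule euclidean_inner)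
    then show "(\<Sum>b\<in>Basis. (b \<bullet> w) * ((b \<bullet> x) * prod_list (map (\<lambda>v. v \<bullet> x) ws)))
        = prod_list (map (\<lambda>v. v \<bullet> x) (w # ws))"
      by (simp add: sum_distrib_right inner_commute mult.assoc)
  qed
  finally show ?thesis .
qed

definition gmn :: "real \<Rightarrow> real^'d \<Rightarrow> (real^'d) list \<Rightarrow> real" where
  "gmn s c vs = integral\<^sup>L (Gd s c) (\<lambda>x. (norm x)\<^sup>2 * prod_list (map (\<lambda>v. v \<bullet> x) vs))"

lemma sum_Basis_inner_self: "(\<Sum>b\<in>(Basis::(real^'d) set). b \<bullet> b) = real CARD('d)"
  by simp

lemma gmn_eq:
  assumes s: "s > 0"
  shows "gmn s (c::real^'d) vs = gm s c (c # vs) + s\<^sup>2 * (real CARD('d) * gm s c vs + (\<Sum>t<length vs. gm s c (vs!t # dl t vs)))"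
proof -
  have "gmn s c vs = integral\<^sup>L (Gd s c) (\<lambda>x. \<Sum>b\<in>Basis. prod_list (map (\<lambda>v. v \<bullet> x) (b # b # vs)))"
    unfolding gmn_def
  proof (intro Bochner_Integration.integral_cong refl)
    fix x :: "real^'d"
    have "x \<bullet> x = (\<Sum>b\<in>Basis. (x \<bullet> b) * (x \<bullet> b))" by (rule euclidean_inner)
    then show "(norm x)\<^sup>2 * prod_list (map (\<lambda>v. v \<bullet> x) vs) = (\<Sum>b\<in>Basis. prod_list (map (\<lambda>v. v \<bullet> x) (b # b # vs)))"
      by (simp add: power2_norm_eq_inner sum_distrib_right inner_commute mult.assoc)
  qed
  also have "\<dots> = (\<Sum>b\<in>Basis. gm s c (b # b # vs))"
    unfolding gm_def
    by (subst Bochner_Integration.integral_sum) (auto intro!: pv_integrable pv_plist pv_mult pv_lin s)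
  also have "\<dots> = (\<Sum>b\<in>Basis. (b \<bullet> c) * gm s c (b # vs) + s\<^sup>2 * ((b \<bullet> b) * gm s c vs
        + (\<Sum>t<length vs. (b \<bullet> vs!t) * gm s c (b # dl t vs))))"
    by (intro sum.cong refl, subst gm_Cons[OF s]) (simp add: sum.lessThan_Suc_shift del: sum.lessThan_Suc)
  also have "\<dots> = gm s c (c # vs) + s\<^sup>2 * (real CARD('d) * gm s c vs + (\<Sum>t<length vs. gm s c (vs!t # dl t vs)))"
  proof -
    have a: "(\<Sum>b\<in>Basis. (b \<bullet> c) * gm s c (b # vs)) = gm s c (c # vs)" by (rule gm_lin[OF s])
    have b: "(\<Sum>b\<in>(Basis::(real^'d) set). (b \<bullet> b) * gm s c vs) = real CARD('d) * gm s c vs"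
      by (simp add: sum_distrib_right[symmetric])
    have c: "(\<Sum>b\<in>Basis. (\<Sum>t<length vs. (b \<bullet> vs!t) * gm s c (b # dl t vs))) = (\<Sum>t<length vs. gm s c (vs!t # dl t vs))"
      by (subst sum.swap) (simp add: gm_lin[OF s])
    show ?thesis
      by (simp add: sum.distrib sum_distrib_left[symmetric] a b c algebra_simps)
  qed
  finally show ?thesis .
qed


lemma mixture_eq_Gd:
  fixes f :: "real^'d \<Rightarrow> real"
  assumes s: "s > 0" and f: "polyv f"
  shows "integrable (mixture s m0 m1) f \<and> integral\<^sup>L (mixture s m0 m1) f = (integral\<^sup>L (Gd s m0) f + integral\<^sup>L (Gd s m1) f) / 2"
proof -
  have fm: "f \<in> borel_measurable borel" using f by (rule pv_meas)
  have i0: "integrable lborel (\<lambda>x. gauss_density s m0 x * f x)"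
    using pv_integrable[OF f s, of m0] unfolding Gd_def by (subst (asm) integrable_density) (auto simp: fm gauss_density_Basis intro!: prod_nonneg)
  have i1: "integrable lborel (\<lambda>x. gauss_density s m1 x * f x)"
    using pv_integrable[OF f s, of m1] unfolding Gd_def by (subst (asm) integrable_density) (auto simp: fm gauss_density_Basis intro!: prod_nonneg)
  have nn: "\<And>m x. 0 \<le> gauss_density s m x" by (auto simp: gauss_density_def intro!: prod_nonneg)
  have eq: "(\<lambda>x. (gauss_density s m0 x / 2 + gauss_density s m1 x / 2) * f x) = (\<lambda>x. (gauss_density s m0 x * f x) / 2 + (gauss_density s m1 x * f x) / 2)"
    by (auto simp: algebra_simps)
  have "integrable (mixture s m0 m1) f"
  proof -
    have ae: "AE x in lborel. 0 \<le> gauss_density s m0 x / 2 + gauss_density s m1 x / 2"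
      by (intro AE_I2) (simp add: nn)
    show ?thesis
      unfolding mixture_def using ae i0 i1 fm by (subst integrable_density) (auto simp: eq)
  qed
  moreover have "integral\<^sup>L (mixture s m0 m1) f = (integral\<^sup>L (Gd s m0) f + integral\<^sup>L (Gd s m1) f) / 2"
  proof -
    have ae: "AE x in lborel. 0 \<le> gauss_density s m0 x / 2 + gauss_density s m1 x / 2"
      by (intro AE_I2) (simp add: nn)
    have ae0: "AE x in lborel. 0 \<le> gauss_density s m0 x" by (intro AE_I2) (simp add: nn)
    have ae1: "AE x in lborel. 0 \<le> gauss_density s m1 x" by (intro AE_I2) (simp add: nn)
    show ?thesis
      unfolding mixture_def Gd_def using ae ae0 ae1 nn i0 i1 fm
      by (simp add: integral_density eq Bochner_Integration.integral_add)
  qed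
  ultimately show ?thesis by blast
qed

definition pl :: "(real^'d) list \<Rightarrow> real^'d \<Rightarrow> real" where
  "pl vs x = prod_list (map (\<lambda>v. v \<bullet> x) vs)"
definition pln :: "(real^'d) list \<Rightarrow> real^'d \<Rightarrow> real" where
  "pln vs x = (norm x)\<^sup>2 * prod_list (map (\<lambda>v. v \<bullet> x) vs)"

lemma pl_simps[simp]: "pl [] x = 1" "pl (v # vs) x = (v \<bullet> x) * pl vs x"
  by (simp_all add: pl_def)

lemma pv_pl: "polyv (pl vs)" unfolding pl_def by (rule pv_plist)
lemma pv_pln: "polyv (pln vs)" unfolding pln_def by (intro pv_mult pv_norm2 pv_plist)

definition mm :: "real \<Rightarrow> real^'d \<Rightarrow> real^'d \<Rightarrow> (real^'d) list \<Rightarrow> real" where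
  "mm s m0 m1 vs = (gm s m0 vs + gm s m1 vs) / 2"
definition mmn :: "real \<Rightarrow> real^'d \<Rightarrow> real^'d \<Rightarrow> (real^'d) list \<Rightarrow> real" where
  "mmn s m0 m1 vs = (gmn s m0 vs + gmn s m1 vs) / 2"

lemma gm_pl: "gm s c vs = integral\<^sup>L (Gd s c) (pl vs)"
  by (simp add: gm_def pl_def[abs_def])
lemma gmn_pln: "gmn s c vs = integral\<^sup>L (Gd s c) (pln vs)"
  by (simp add: gmn_def pln_def[abs_def])

lemma mixture_pl: assumes s: "s > 0" shows "integral\<^sup>L (mixture s m0 m1) (pl vs) = mm s m0 m1 vs"
  using conjunct2[OF mixture_eq_Gd[OF s pv_pl, of m0 m1]] by (simp add: mm_def gm_pl)
lemma mixture_pln: assumes s: "s > 0" shows "integral\<^sup>L (mixture s m0 m1) (pln vs) = mmn s m0 m1 vs"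
  using conjunct2[OF mixture_eq_Gd[OF s pv_pln, of m0 m1]] by (simp add: mmn_def gmn_pln)

lemma mm_lin: "s > 0 \<Longrightarrow> (\<Sum>b\<in>Basis. (b \<bullet> w) * mm s m0 m1 (b # ws)) = mm s m0 m1 (w # ws)"
  unfolding mm_def by (simp add: sum_divide_distrib[symmetric] sum.distrib distrib_left gm_lin)

lemma prob_space_mixture: assumes s: "s > 0" shows "prob_space (mixture s m0 m1)"
proof (rule prob_spaceI)
  let ?M = "mixture s m0 m1"
  have h: "integrable ?M (\<lambda>_. 1::real) \<and> integral\<^sup>L ?M (\<lambda>_. 1::real) = (integral\<^sup>L (Gd s m0) (\<lambda>_. 1) + integral\<^sup>L (Gd s m1) (\<lambda>_. 1)) / 2"
    by (rule mixture_eq_Gd[OF s pv_const[of 1]])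
  have g0: "integral\<^sup>L (Gd s m0) (\<lambda>_. 1::real) = 1" using prob_space.prob_space[OF prob_space_Gd[OF s]] by simp
  have g1: "integral\<^sup>L (Gd s m1) (\<lambda>_. 1::real) = 1" using prob_space.prob_space[OF prob_space_Gd[OF s]] by simp
  have fin: "emeasure ?M (space ?M) < \<infinity>"
  proof -
    have "(\<integral>\<^sup>+ x. ennreal (norm (1::real)) \<partial>?M) < \<infinity>" using conjunct1[OF h] by (simp add: integrable_iff_bounded)
    then show ?thesis by simp
  qed
  have "measure ?M (space ?M) = 1" using conjunct2[OF h] g0 g1 by simp
  then show "emeasure ?M (space ?M) = 1" using fin by (simp add: emeasure_eq_ennreal_measure)
qed

lemma sets_mixture[simp, measurable_cong]: "sets (mixture s m0 m1) = sets borel"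
  by (simp add: mixture_def)

lemma prod_if3:
  assumes "finite A" "l \<in> A" "k \<in> A" "k' \<in> A" "l \<noteq> k" "l \<noteq> k'" "k \<noteq> k'"
  shows "(\<Prod>i\<in>A. (if i = l then a else if i = k then b else if i = k' then c else (1::real))) = a * b * c"
proof -
  have "(\<Prod>i\<in>A. (if i = l then a else if i = k then b else if i = k' then c else (1::real)))
      = (\<Prod>i\<in>{l,k,k'}. (if i = l then a else if i = k then b else if i = k' then c else (1::real)))"
    using assms by (intro prod.mono_neutral_right) auto
  also have "\<dots> = a * b * c" using assms by simp
  finally show ?thesis .
qed

lemma prod_if2:
  assumes "finite A" "l \<in> A" "k \<in> A" "l \<noteq> k"
  shows "(\<Prod>i\<in>A. (if i = l then a else if i = k then b else (1::real))) = a * b"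
proof -
  have "(\<Prod>i\<in>A. (if i = l then a else if i = k then b else (1::real)))
      = (\<Prod>i\<in>{l,k}. (if i = l then a else if i = k then b else (1::real)))"
    using assms by (intro prod.mono_neutral_right) auto
  also have "\<dots> = a * b" using assms by simp
  finally show ?thesis .
qed

lemma prod_if1:
  assumes "finite A" "l \<in> A"
  shows "(\<Prod>i\<in>A. (if i = l then a else (1::real))) = a"
proof -
  have "(\<Prod>i\<in>A. (if i = l then a else (1::real))) = (\<Prod>i\<in>{l}. (if i = l then a else (1::real)))"
    using assms by (intro prod.mono_neutral_right) auto
  also have "\<dots> = a" by simp
  finally show ?thesis .
qed

locale rk =
  fixes L :: nat and s :: real and m0 m1 :: "real^'d"
  assumes s: "s > 0"
begin

abbreviation "\<mu> \<equiv> mixture s m0 m1"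
abbreviation "P \<equiv> data_law L s m0 m1"
abbreviation "Em f \<equiv> integral\<^sup>L \<mu> f"

lemma psf: "product_sigma_finite (\<lambda>_::nat. \<mu>)"
  unfolding product_sigma_finite_def
  using prob_space_mixture[OF s] prob_space_imp_sigma_finite by blast

lemma int_mu: "polyv f \<Longrightarrow> integrable \<mu> f"
  using mixture_eq_Gd[OF s] by blast

lemma E_prod:
  assumes F: "\<And>i. i < L \<Longrightarrow> polyv (F i)"
  shows "integrable P (\<lambda>X. \<Prod>i<L. F i (X i)) \<and> integral\<^sup>L P (\<lambda>X. \<Prod>i<L. F i (X i)) = (\<Prod>i<L. Em (F i))"
proof -
  interpret product_sigma_finite "\<lambda>_::nat. \<mu>" by (rule psf)
  show ?thesis unfolding data_law_def
    using F by (intro conjI product_integrable_prod product_integral_prod int_mu) auto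
qed

lemma E1:
  assumes "l < L" "polyv f"
  shows "integrable P (\<lambda>X. f (X l)) \<and> integral\<^sup>L P (\<lambda>X. f (X l)) = Em f"
proof -
  define F where "F i = (if i = l then f else (\<lambda>_. 1))" for i
  have pv: "polyv (F i)" for i unfolding F_def using assms by (auto intro: pv_const)
  have eq: "(\<Prod>i<L. F i (X i)) = f (X l)" for X
    unfolding F_def using prod_if1[of "{..<L}" l "f (X l)"] assms
    by (simp add: if_distrib[where f="\<lambda>g. g (X _)" for X] cong: if_cong)
  have eq2: "(\<Prod>i<L. Em (F i)) = Em f"
  proof -
    have "(\<Prod>i<L. Em (F i)) = (\<Prod>i<L. (if i = l then Em f else 1))"
      unfolding F_def using prob_space.prob_space[OF prob_space_mixture[OF s]] by (intro prod.cong) auto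
    then show ?thesis using prod_if1[of "{..<L}" l] assms by simp
  qed
  show ?thesis using E_prod[of F] pv eq eq2 by simp
qed

lemma E2:
  assumes "l < L" "k < L" "l \<noteq> k" "polyv f" "polyv g"
  shows "integrable P (\<lambda>X. f (X l) * g (X k)) \<and> integral\<^sup>L P (\<lambda>X. f (X l) * g (X k)) = Em f * Em g"
proof -
  define F where "F i = (if i = l then f else if i = k then g else (\<lambda>_. 1))" for i
  have pv: "polyv (F i)" for i unfolding F_def using assms by (auto intro: pv_const)
  have eq: "(\<Prod>i<L. F i (X i)) = f (X l) * g (X k)" for X
  proof -
    have "(\<Prod>i<L. F i (X i)) = (\<Prod>i<L. (if i = l then f (X l) else if i = k then g (X k) else 1))"
      unfolding F_def by (intro prod.cong) auto
    then show ?thesis using prod_if2[of "{..<L}" l k] assms by simp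
  qed
  have eq2: "(\<Prod>i<L. Em (F i)) = Em f * Em g"
  proof -
    have "(\<Prod>i<L. Em (F i)) = (\<Prod>i<L. (if i = l then Em f else if i = k then Em g else 1))"
      unfolding F_def using prob_space.prob_space[OF prob_space_mixture[OF s]] by (intro prod.cong) auto
    then show ?thesis using prod_if2[of "{..<L}" l k] assms by simp
  qed
  show ?thesis using E_prod[of F] pv eq eq2 by simp
qed

lemma E3:
  assumes "l < L" "k < L" "k' < L" "l \<noteq> k" "l \<noteq> k'" "k \<noteq> k'" "polyv f" "polyv g" "polyv h"
  shows "integrable P (\<lambda>X. f (X l) * g (X k) * h (X k')) \<and> integral\<^sup>L P (\<lambda>X. f (X l) * g (X k) * h (X k')) = Em f * Em g * Em h"
proof -
  define F where "F i = (if i = l then f else if i = k then g else if i = k' then h else (\<lambda>_. 1))" for i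
  have pv: "polyv (F i)" for i unfolding F_def using assms by (auto intro: pv_const)
  have eq: "(\<Prod>i<L. F i (X i)) = f (X l) * g (X k) * h (X k')" for X
  proof -
    have "(\<Prod>i<L. F i (X i)) = (\<Prod>i<L. (if i = l then f (X l) else if i = k then g (X k) else if i = k' then h (X k') else 1))"
      unfolding F_def by (intro prod.cong) auto
    then show ?thesis using prod_if3[of "{..<L}" l k k'] assms by simp
  qed
  have eq2: "(\<Prod>i<L. Em (F i)) = Em f * Em g * Em h"
  proof -
    have "(\<Prod>i<L. Em (F i)) = (\<Prod>i<L. (if i = l then Em f else if i = k then Em g else if i = k' then Em h else 1))"
      unfolding F_def using prob_space.prob_space[OF prob_space_mixture[OF s]] by (intro prod.cong) auto
    then show ?thesis using prod_if3[of "{..<L}" l k k'] assms by simp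
  qed
  show ?thesis using E_prod[of F] pv eq eq2 by simp
qed

end

definition qf :: "real^'d \<Rightarrow> real^'d \<Rightarrow> real^'d \<Rightarrow> real^'d \<Rightarrow> real" where
  "qf u0 u1 x y = (x \<bullet> u0) * (u0 \<bullet> y) + (x \<bullet> u1) * (u1 \<bullet> y)"

definition Sv :: "real \<Rightarrow> real^'d \<Rightarrow> real^'d \<Rightarrow> real^'d \<Rightarrow> real^'d" where
  "Sv s m0 m1 u = s\<^sup>2 *\<^sub>R u + (1/2) *\<^sub>R ((u \<bullet> m0) *\<^sub>R m0 + (u \<bullet> m1) *\<^sub>R m1)"

lemma xy_sum: "x \<bullet> y = (\<Sum>b\<in>Basis. (b \<bullet> x) * (b \<bullet> (y::real^'d)))"
  by (subst euclidean_inner) (simp add: inner_commute)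

context rk begin

lemma gm1: "gm s c [u] = u \<bullet> c"
  using gm_Cons[OF s, of c u "[]"] s by simp

lemma mm2: "mm s m0 m1 [b, u] = b \<bullet> Sv s m0 m1 u"
  unfolding mm_def Sv_def using gm_Cons[OF s, of _ b "[u]"] s
  by (simp add: gm1 inner_add_right algebra_simps)

lemma mmSv: "(\<Sum>b\<in>Basis. mm s m0 m1 (b # ws) * mm s m0 m1 [b, u]) = mm s m0 m1 (Sv s m0 m1 u # ws)"
  using mm_lin[OF s, where w = "Sv s m0 m1 u" and ws = ws and ?m0.0 = m0 and ?m1.0 = m1] by (simp add: mm2 inner_commute mult.commute)

lemma int_pl: "integrable \<mu> (pl vs)" by (rule int_mu[OF pv_pl])
lemma int_pln: "integrable \<mu> (pln vs)" by (rule int_mu[OF pv_pln])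

lemma P2a:
  assumes l: "l < L"
  shows "integrable P (\<lambda>X. qf u0 u1 (X l) (X l) * (X l \<bullet> X l)) \<and>
         integral\<^sup>L P (\<lambda>X. qf u0 u1 (X l) (X l) * (X l \<bullet> X l)) = mmn s m0 m1 [u0,u0] + mmn s m0 m1 [u1,u1]"
proof -
  have eq: "qf u0 u1 x x * (x \<bullet> x) = pln [u0,u0] x + pln [u1,u1] x" for x
    by (simp add: qf_def pln_def power2_norm_eq_inner inner_commute algebra_simps)
  have "integrable P (\<lambda>X. pln [u0,u0] (X l) + pln [u1,u1] (X l)) \<and>
        integral\<^sup>L P (\<lambda>X. pln [u0,u0] (X l) + pln [u1,u1] (X l)) = Em (\<lambda>x. pln [u0,u0] x + pln [u1,u1] x)"
    by (rule E1[OF l pv_add[OF pv_pln pv_pln]])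
  moreover have "Em (\<lambda>x. pln [u0,u0] x + pln [u1,u1] x) = mmn s m0 m1 [u0,u0] + mmn s m0 m1 [u1,u1]"
    by (simp add: int_pln mixture_pln[OF s])
  ultimately show ?thesis by (simp add: eq)
qed

lemma P2b:
  assumes l: "l < L" and k: "k < L" and lk: "l \<noteq> k"
  shows "integrable P (\<lambda>X. qf u0 u1 (X l) (X k) * (X l \<bullet> X k)) \<and>
         integral\<^sup>L P (\<lambda>X. qf u0 u1 (X l) (X k) * (X l \<bullet> X k)) =
           mm s m0 m1 [Sv s m0 m1 u0, u0] + mm s m0 m1 [Sv s m0 m1 u1, u1]"
proof -
  define F where "F b X = pl [b,u0] (X l) * pl [b,u0] (X k) + pl [b,u1] (X l) * pl [b,u1] (X k)" for b X
  have eq: "qf u0 u1 (X l) (X k) * (X l \<bullet> X k) = (\<Sum>b\<in>Basis. F b X)" for X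
  proof -
    have "(\<Sum>b\<in>Basis. F b X) = (\<Sum>b\<in>Basis. qf u0 u1 (X l) (X k) * ((b \<bullet> X l) * (b \<bullet> X k)))"
      unfolding F_def by (intro sum.cong refl) (simp add: qf_def inner_commute algebra_simps)
    then show ?thesis by (simp add: xy_sum[of "X l"] sum_distrib_left)
  qed
  have iF: "integrable P (F b) \<and> integral\<^sup>L P (F b) = mm s m0 m1 [b,u0] * mm s m0 m1 [b,u0] + mm s m0 m1 [b,u1] * mm s m0 m1 [b,u1]" for b
    using E2[OF l k lk pv_pl pv_pl, of "[b,u0]" "[b,u0]"] E2[OF l k lk pv_pl pv_pl, of "[b,u1]" "[b,u1]"]
    unfolding F_def by (simp add: mixture_pl[OF s])
  have "integrable P (\<lambda>X. \<Sum>b\<in>Basis. F b X)" using iF by auto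
  moreover have "integral\<^sup>L P (\<lambda>X. \<Sum>b\<in>Basis. F b X) = mm s m0 m1 [Sv s m0 m1 u0, u0] + mm s m0 m1 [Sv s m0 m1 u1, u1]"
    using iF mmSv[of "[u0]" u0] mmSv[of "[u1]" u1]
    by (simp add: Bochner_Integration.integral_sum sum.distrib)
  ultimately show ?thesis by (simp add: eq)
qed

end

locale rku = rk L s m0 m1 for L s and m0 m1 :: "real^'d" +
  fixes u0 u1 :: "real^'d"
begin

abbreviation "q \<equiv> qf u0 u1"
abbreviation "M \<equiv> mm s m0 m1"
abbreviation "MN \<equiv> mmn s m0 m1"
abbreviation "S \<equiv> Sv s m0 m1"

lemma P3a:
  assumes l: "l < L"
  shows "integrable P (\<lambda>X. q (X l) (X l) * q (X l) (X l) * (X l \<bullet> X l)) \<and>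
         integral\<^sup>L P (\<lambda>X. q (X l) (X l) * q (X l) (X l) * (X l \<bullet> X l)) = MN [u0,u0,u0,u0] + 2 * MN [u0,u0,u1,u1] + MN [u1,u1,u1,u1]"
proof -
  have eq: "q x x * q x x * (x \<bullet> x) = pln [u0,u0,u0,u0] x + 2 * pln [u0,u0,u1,u1] x + pln [u1,u1,u1,u1] x" for x
    by (simp add: qf_def pln_def power2_norm_eq_inner inner_commute algebra_simps)
  have pv: "polyv (\<lambda>x. pln [u0,u0,u0,u0] x + 2 * pln [u0,u0,u1,u1] x + pln [u1,u1,u1,u1] x)"
    by (intro pv_add pv_mult pv_pln pv_const)
  have "integrable P (\<lambda>X. pln [u0,u0,u0,u0] (X l) + 2 * pln [u0,u0,u1,u1] (X l) + pln [u1,u1,u1,u1] (X l)) \<and>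
        integral\<^sup>L P (\<lambda>X. pln [u0,u0,u0,u0] (X l) + 2 * pln [u0,u0,u1,u1] (X l) + pln [u1,u1,u1,u1] (X l))
        = Em (\<lambda>x. pln [u0,u0,u0,u0] x + 2 * pln [u0,u0,u1,u1] x + pln [u1,u1,u1,u1] x)"
    by (rule E1[OF l pv])
  moreover have "Em (\<lambda>x. pln [u0,u0,u0,u0] x + 2 * pln [u0,u0,u1,u1] x + pln [u1,u1,u1,u1] x) = MN [u0,u0,u0,u0] + 2 * MN [u0,u0,u1,u1] + MN [u1,u1,u1,u1]"
    by (simp add: int_pln mixture_pln[OF s])
  ultimately show ?thesis by (simp add: eq)
qed

lemma P3b:
  assumes l: "l < L" and k: "k < L" and lk: "l \<noteq> k"
  shows "integrable P (\<lambda>X. q (X l) (X l) * q (X l) (X k) * (X l \<bullet> X k)) \<and>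
         integral\<^sup>L P (\<lambda>X. q (X l) (X l) * q (X l) (X k) * (X l \<bullet> X k)) =
           M [S u0, u0, u0, u0] + M [S u0, u1, u1, u0] + M [S u1, u0, u0, u1] + M [S u1, u1, u1, u1]"
proof -
  define F where "F b X = pl [b,u0,u0,u0] (X l) * pl [b,u0] (X k) + pl [b,u1,u1,u0] (X l) * pl [b,u0] (X k)
     + pl [b,u0,u0,u1] (X l) * pl [b,u1] (X k) + pl [b,u1,u1,u1] (X l) * pl [b,u1] (X k)" for b X
  have eq: "q (X l) (X l) * q (X l) (X k) * (X l \<bullet> X k) = (\<Sum>b\<in>Basis. F b X)" for X
  proof -
    have "(\<Sum>b\<in>Basis. F b X) = (\<Sum>b\<in>Basis. q (X l) (X l) * q (X l) (X k) * ((b \<bullet> X l) * (b \<bullet> X k)))"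
      unfolding F_def by (intro sum.cong refl) (simp add: qf_def inner_commute algebra_simps)
    then show ?thesis by (simp add: xy_sum[of "X l"] sum_distrib_left)
  qed
  have iF: "integrable P (F b) \<and> integral\<^sup>L P (F b) = M [b,u0,u0,u0] * M [b,u0] + M [b,u1,u1,u0] * M [b,u0]
      + M [b,u0,u0,u1] * M [b,u1] + M [b,u1,u1,u1] * M [b,u1]" for b
    using E2[OF l k lk pv_pl pv_pl, of "[b,u0,u0,u0]" "[b,u0]"] E2[OF l k lk pv_pl pv_pl, of "[b,u1,u1,u0]" "[b,u0]"]
      E2[OF l k lk pv_pl pv_pl, of "[b,u0,u0,u1]" "[b,u1]"] E2[OF l k lk pv_pl pv_pl, of "[b,u1,u1,u1]" "[b,u1]"]
    unfolding F_def by (simp add: mixture_pl[OF s])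
  have "integrable P (\<lambda>X. \<Sum>b\<in>Basis. F b X)" using iF by auto
  moreover have "integral\<^sup>L P (\<lambda>X. \<Sum>b\<in>Basis. F b X) = M [S u0, u0, u0, u0] + M [S u0, u1, u1, u0] + M [S u1, u0, u0, u1] + M [S u1, u1, u1, u1]"
    using iF mmSv[of "[u0,u0,u0]" u0] mmSv[of "[u1,u1,u0]" u0] mmSv[of "[u0,u0,u1]" u1] mmSv[of "[u1,u1,u1]" u1]
    by (simp add: Bochner_Integration.integral_sum sum.distrib)
  ultimately show ?thesis by (simp add: eq)
qed

lemma P3c:
  assumes l: "l < L" and k: "k < L" and lk: "l \<noteq> k"
  shows "integrable P (\<lambda>X. q (X l) (X k) * q (X l) (X l) * (X k \<bullet> X l)) \<and>
         integral\<^sup>L P (\<lambda>X. q (X l) (X k) * q (X l) (X l) * (X k \<bullet> X l)) =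
           M [S u0, u0, u0, u0] + M [S u0, u1, u1, u0] + M [S u1, u0, u0, u1] + M [S u1, u1, u1, u1]"
proof -
  have "(\<lambda>X. q (X l) (X k) * q (X l) (X l) * (X k \<bullet> X l)) = (\<lambda>X. q (X l) (X l) * q (X l) (X k) * (X l \<bullet> X k))"
    by (simp add: inner_commute mult.commute)
  then show ?thesis using P3b[OF l k lk] by simp
qed

lemma P3d:
  assumes l: "l < L" and k: "k < L" and lk: "l \<noteq> k"
  shows "integrable P (\<lambda>X. q (X l) (X k) * q (X l) (X k) * (X k \<bullet> X k)) \<and>
         integral\<^sup>L P (\<lambda>X. q (X l) (X k) * q (X l) (X k) * (X k \<bullet> X k)) =
           M [u0,u0] * MN [u0,u0] + 2 * (M [u0,u1] * MN [u0,u1]) + M [u1,u1] * MN [u1,u1]"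
proof -
  define F where "F X = pl [u0,u0] (X l) * pln [u0,u0] (X k) + 2 * (pl [u0,u1] (X l) * pln [u0,u1] (X k))
     + pl [u1,u1] (X l) * pln [u1,u1] (X k)" for X
  have eq: "q (X l) (X k) * q (X l) (X k) * (X k \<bullet> X k) = F X" for X
    unfolding F_def by (simp add: qf_def pln_def power2_norm_eq_inner inner_commute algebra_simps)
  have a: "integrable P (\<lambda>X. pl vs (X l) * pln ws (X k)) \<and> integral\<^sup>L P (\<lambda>X. pl vs (X l) * pln ws (X k)) = M vs * MN ws" for vs ws
    using E2[OF l k lk pv_pl pv_pln, of vs ws] by (simp add: mixture_pl[OF s] mixture_pln[OF s])
  have "integrable P F" unfolding F_def using a by (simp del: pl_simps)
  moreover have "integral\<^sup>L P F = M [u0,u0] * MN [u0,u0] + 2 * (M [u0,u1] * MN [u0,u1]) + M [u1,u1] * MN [u1,u1]"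
    unfolding F_def using a by (simp del: pl_simps)
  moreover have "(\<lambda>X. q (X l) (X k) * q (X l) (X k) * (X k \<bullet> X k)) = F" by (rule ext) (rule eq)
  ultimately show ?thesis by (simp del: pl_simps)
qed

lemma P3e:
  assumes l: "l < L" and k: "k < L" and k': "k' < L" and lk: "l \<noteq> k" and lk': "l \<noteq> k'" and kk': "k \<noteq> k'"
  shows "integrable P (\<lambda>X. q (X l) (X k) * q (X l) (X k') * (X k \<bullet> X k')) \<and>
         integral\<^sup>L P (\<lambda>X. q (X l) (X k) * q (X l) (X k') * (X k \<bullet> X k')) =
           M [u0,u0] * M [S u0, u0] + M [u0,u1] * M [S u1, u0] + M [u1,u0] * M [S u0, u1] + M [u1,u1] * M [S u1, u1]"
proof -
  define F where "F b X = pl [u0,u0] (X l) * pl [b,u0] (X k) * pl [b,u0] (X k')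
     + pl [u0,u1] (X l) * pl [b,u0] (X k) * pl [b,u1] (X k')
     + pl [u1,u0] (X l) * pl [b,u1] (X k) * pl [b,u0] (X k')
     + pl [u1,u1] (X l) * pl [b,u1] (X k) * pl [b,u1] (X k')" for b X
  have eq: "q (X l) (X k) * q (X l) (X k') * (X k \<bullet> X k') = (\<Sum>b\<in>Basis. F b X)" for X
  proof -
    have "(\<Sum>b\<in>Basis. F b X) = (\<Sum>b\<in>Basis. q (X l) (X k) * q (X l) (X k') * ((b \<bullet> X k) * (b \<bullet> X k')))"
      unfolding F_def by (intro sum.cong refl) (simp add: qf_def inner_commute algebra_simps)
    then show ?thesis by (simp add: xy_sum[of "X k"] sum_distrib_left)
  qed
  have a: "integrable P (\<lambda>X. pl vs (X l) * pl ws (X k) * pl zs (X k')) \<and>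
      integral\<^sup>L P (\<lambda>X. pl vs (X l) * pl ws (X k) * pl zs (X k')) = M vs * M ws * M zs" for vs ws zs
    using E3[OF l k k' lk lk' kk' pv_pl pv_pl pv_pl, of vs ws zs] by (simp add: mixture_pl[OF s])
  have iF: "integrable P (F b) \<and> integral\<^sup>L P (F b) =
      M [u0,u0] * M [b,u0] * M [b,u0] + M [u0,u1] * M [b,u0] * M [b,u1] + M [u1,u0] * M [b,u1] * M [b,u0] + M [u1,u1] * M [b,u1] * M [b,u1]" for b
    unfolding F_def using a by (simp del: pl_simps)
  have sw: "(\<Sum>b\<in>Basis. M [b,w] * M [b,u]) = M [S u, w]" for w u
    using mmSv[of "[w]" u] by simp
  have "integrable P (\<lambda>X. \<Sum>b\<in>Basis. F b X)" using iF by auto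
  moreover have "integral\<^sup>L P (\<lambda>X. \<Sum>b\<in>Basis. F b X) =
      M [u0,u0] * M [S u0, u0] + M [u0,u1] * M [S u1, u0] + M [u1,u0] * M [S u0, u1] + M [u1,u1] * M [S u1, u1]"
    using iF by (simp add: Bochner_Integration.integral_sum sum.distrib mult.assoc sum_distrib_left[symmetric] sw)
  ultimately show ?thesis by (simp add: eq)
qed

end

lemma sum1_pat:
  assumes l: "l < L" and G: "\<And>k. k < L \<Longrightarrow> k \<noteq> l \<Longrightarrow> G k = e"
  shows "(\<Sum>k<L. G k) = G l + (real L - 1) * (e::real)"
proof -
  have "(\<Sum>k<L. G k) = G l + (\<Sum>k\<in>{..<L}-{l}. G k)" using l by (simp add: sum.remove)
  also have "(\<Sum>k\<in>{..<L}-{l}. G k) = (\<Sum>k\<in>{..<L}-{l}. e)" using G by (intro sum.cong) auto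
  also have "\<dots> = (real L - 1) * e" using l by (simp add: of_nat_diff)
  finally show ?thesis .
qed

lemma sum2_pat:
  assumes l: "l < L"
    and G2: "\<And>k'. k' < L \<Longrightarrow> k' \<noteq> l \<Longrightarrow> G l k' = e2"
    and G3: "\<And>k. k < L \<Longrightarrow> k \<noteq> l \<Longrightarrow> G k l = e3"
    and G4: "\<And>k. k < L \<Longrightarrow> k \<noteq> l \<Longrightarrow> G k k = e4"
    and G5: "\<And>k k'. k < L \<Longrightarrow> k' < L \<Longrightarrow> k \<noteq> l \<Longrightarrow> k' \<noteq> l \<Longrightarrow> k \<noteq> k' \<Longrightarrow> G k k' = e5"
  shows "(\<Sum>k<L. \<Sum>k'<L. G k k') = G l l + (real L - 1) * (e2 + e3 + e4) + (real L - 1) * (real L - 2) * (e5::real)"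
proof -
  define A where "A = {..<L} - {l}"
  have inner: "(\<Sum>k'<L. G k k') = e3 + e4 + (real L - 2) * e5" if k: "k \<in> A" for k
  proof -
    have kL: "k < L" "k \<noteq> l" using k by (auto simp: A_def)
    have "(\<Sum>k'<L. G k k') = G k l + (\<Sum>k'\<in>A. G k k')" unfolding A_def by (rule sum.remove) (use l in auto)
    also have "(\<Sum>k'\<in>A. G k k') = G k k + (\<Sum>k'\<in>A-{k}. G k k')" by (rule sum.remove) (use k in \<open>auto simp: A_def\<close>)
    also have "(\<Sum>k'\<in>A-{k}. G k k') = (\<Sum>k'\<in>A-{k}. e5)" using G5 kL by (intro sum.cong) (auto simp: A_def)
    also have "\<dots> = (real L - 2) * e5"
    proof -
      have "card (A - {k}) = L - 2" using k l by (simp add: A_def card_Diff_subset)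
      moreover have "L \<ge> 2" using kL l by linarith
      ultimately show ?thesis by (simp add: of_nat_diff)
    qed
    finally show ?thesis using G3 G4 kL by simp
  qed
  have "(\<Sum>k<L. \<Sum>k'<L. G k k') = (\<Sum>k'<L. G l k') + (\<Sum>k\<in>A. \<Sum>k'<L. G k k')"
    unfolding A_def by (rule sum.remove) (use l in auto)
  also have "(\<Sum>k'<L. G l k') = G l l + (real L - 1) * e2" by (rule sum1_pat[OF l G2])
  also have "(\<Sum>k\<in>A. \<Sum>k'<L. G k k') = (\<Sum>k\<in>A. e3 + e4 + (real L - 2) * e5)" by (intro sum.cong refl inner)
  also have "\<dots> = (real L - 1) * (e3 + e4 + (real L - 2) * e5)" using l by (simp add: A_def of_nat_diff)
  finally show ?thesis by (simp add: algebra_simps)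
qed

lemma norm_T_expand:
  fixes a :: "real^'d" and X :: "nat \<Rightarrow> real^'d"
  shows "(norm (a - (2 / real L) *\<^sub>R (\<Sum>k<L. (lam * qf u0 u1 a (X k)) *\<^sub>R X k)))\<^sup>2
    = a \<bullet> a - (4 * lam / real L) * (\<Sum>k<L. qf u0 u1 a (X k) * (a \<bullet> X k))
      + (4 * lam\<^sup>2 / (real L)\<^sup>2) * (\<Sum>k<L. \<Sum>k'<L. qf u0 u1 a (X k) * qf u0 u1 a (X k') * (X k \<bullet> X k'))"
proof -
  define T where "T = (\<Sum>k<L. (lam * qf u0 u1 a (X k)) *\<^sub>R X k)"
  have aT: "a \<bullet> T = lam * (\<Sum>k<L. qf u0 u1 a (X k) * (a \<bullet> X k))"
    unfolding T_def by (simp add: inner_sum_right sum_distrib_left algebra_simps)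
  have TT: "T \<bullet> T = lam\<^sup>2 * (\<Sum>k<L. \<Sum>k'<L. qf u0 u1 a (X k) * qf u0 u1 a (X k') * (X k \<bullet> X k'))"
    unfolding T_def inner_sum_left by (simp add: inner_sum_right sum_distrib_left power2_eq_square algebra_simps)
  have "(norm (a - (2 / real L) *\<^sub>R T))\<^sup>2 = a \<bullet> a - 2 * (2 / real L) * (a \<bullet> T) + (2 / real L)\<^sup>2 * (T \<bullet> T)"
    by (simp only: power2_norm_eq_inner) (simp add: inner_diff_left inner_diff_right inner_commute power2_eq_square algebra_simps)
  then show ?thesis unfolding T_def[symmetric] aT TT by (simp add: power2_eq_square algebra_simps)
qed

definition RVf :: "real \<Rightarrow> real \<Rightarrow> real \<Rightarrow> real^'d \<Rightarrow> real^'d \<Rightarrow> real^'d \<Rightarrow> real^'d \<Rightarrow> real" where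
  "RVf LL lam s m0 m1 u0 u1 = (let M = mm s m0 m1; MN = mmn s m0 m1; S = Sv s m0 m1 in
     MN [] - (4 * lam / LL) * ((MN [u0,u0] + MN [u1,u1]) + (LL - 1) * (M [S u0, u0] + M [S u1, u1]))
     + (4 * lam\<^sup>2 / LL\<^sup>2) * ((MN [u0,u0,u0,u0] + 2 * MN [u0,u0,u1,u1] + MN [u1,u1,u1,u1])
        + (LL - 1) * (2 * (M [S u0, u0, u0, u0] + M [S u0, u1, u1, u0] + M [S u1, u0, u0, u1] + M [S u1, u1, u1, u1])
                      + (M [u0,u0] * MN [u0,u0] + 2 * (M [u0,u1] * MN [u0,u1]) + M [u1,u1] * MN [u1,u1]))
        + (LL - 1) * (LL - 2) * (M [u0,u0] * M [S u0, u0] + M [u0,u1] * M [S u1, u0] + M [u1,u0] * M [S u0, u1] + M [u1,u1] * M [S u1, u1])))"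

context rku begin

lemma Tlin_qf: "Tlin L lam u0 u1 X l = (2 / real L) *\<^sub>R (\<Sum>k<L. (lam * qf u0 u1 (X l) (X k)) *\<^sub>R X k)"
  by (simp add: Tlin_def qf_def)

lemma risk_row:
  assumes l: "l < L"
  shows "integrable P (\<lambda>X. (norm (X l - Tlin L lam u0 u1 X l))\<^sup>2) \<and>
         integral\<^sup>L P (\<lambda>X. (norm (X l - Tlin L lam u0 u1 X l))\<^sup>2) = RVf (real L) lam s m0 m1 u0 u1"
proof -
  define F2 where "F2 k X = q (X l) (X k) * (X l \<bullet> X k)" for k X
  define F3 where "F3 k k' X = q (X l) (X k) * q (X l) (X k') * (X k \<bullet> X k')" for k k' X
  define V2a where "V2a = MN [u0,u0] + MN [u1,u1]"
  define V2b where "V2b = M [S u0, u0] + M [S u1, u1]"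
  define V3a where "V3a = MN [u0,u0,u0,u0] + 2 * MN [u0,u0,u1,u1] + MN [u1,u1,u1,u1]"
  define V3b where "V3b = M [S u0, u0, u0, u0] + M [S u0, u1, u1, u0] + M [S u1, u0, u0, u1] + M [S u1, u1, u1, u1]"
  define V3d where "V3d = M [u0,u0] * MN [u0,u0] + 2 * (M [u0,u1] * MN [u0,u1]) + M [u1,u1] * MN [u1,u1]"
  define V3e where "V3e = M [u0,u0] * M [S u0, u0] + M [u0,u1] * M [S u1, u0] + M [u1,u0] * M [S u0, u1] + M [u1,u1] * M [S u1, u1]"
  have pw: "(norm (X l - Tlin L lam u0 u1 X l))\<^sup>2 = X l \<bullet> X l - (4 * lam / real L) * (\<Sum>k<L. F2 k X)
      + (4 * lam\<^sup>2 / (real L)\<^sup>2) * (\<Sum>k<L. \<Sum>k'<L. F3 k k' X)" for X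
    unfolding Tlin_qf F2_def F3_def by (rule norm_T_expand)
  have i2: "integrable P (F2 k) \<and> integral\<^sup>L P (F2 k) = (if k = l then V2a else V2b)" if k: "k < L" for k
  proof (cases "k = l")
    case True then show ?thesis using P2a[OF l, of u0 u1] unfolding F2_def V2a_def by simp
  next
    case False then show ?thesis using P2b[OF l k, of u0 u1] unfolding F2_def V2b_def by auto
  qed
  have i3: "integrable P (F3 k k') \<and> integral\<^sup>L P (F3 k k') =
      (if k = l \<and> k' = l then V3a else if k = l then V3b else if k' = l then V3b else if k = k' then V3d else V3e)"
    if k: "k < L" and k': "k' < L" for k k'
  proof -
    consider "k = l \<and> k' = l" | "k = l \<and> k' \<noteq> l" | "k \<noteq> l \<and> k' = l" | "k \<noteq> l \<and> k' \<noteq> l \<and> k = k'" | "k \<noteq> l \<and> k' \<noteq> l \<and> k \<noteq> k'" by blast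
    then show ?thesis
    proof cases
      case 1 then show ?thesis using P3a[OF l] unfolding F3_def V3a_def by simp
    next
      case 2 then show ?thesis using P3b[OF l k'] unfolding F3_def V3b_def by auto
    next
      case 3 then show ?thesis using P3c[OF l k] unfolding F3_def V3b_def by auto
    next
      case 4 then show ?thesis using P3d[OF l k] unfolding F3_def V3d_def by auto
    next
      case 5 then show ?thesis using P3e[OF l k k'] unfolding F3_def V3e_def by auto
    qed
  qed
  have i1: "integrable P (\<lambda>X. X l \<bullet> X l) \<and> integral\<^sup>L P (\<lambda>X. X l \<bullet> X l) = MN []"
  proof -
    have e: "(\<lambda>X. X l \<bullet> X l) = (\<lambda>X. pln [] (X l))" by (simp add: pln_def power2_norm_eq_inner)
    show ?thesis unfolding e using E1[OF l pv_pln, of "[]"] by (simp only: mixture_pln[OF s])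
  qed
  have int2: "integrable P (\<lambda>X. \<Sum>k<L. F2 k X)" using i2 by auto
  have int3: "integrable P (\<lambda>X. \<Sum>k<L. \<Sum>k'<L. F3 k k' X)"
    by (intro Bochner_Integration.integrable_sum) (use i3 in auto)
  have s2: "integral\<^sup>L P (\<lambda>X. \<Sum>k<L. F2 k X) = V2a + (real L - 1) * V2b"
  proof -
    have "integral\<^sup>L P (\<lambda>X. \<Sum>k<L. F2 k X) = (\<Sum>k<L. integral\<^sup>L P (F2 k))"
      using i2 by (simp add: Bochner_Integration.integral_sum)
    also have "\<dots> = V2a + (real L - 1) * V2b"
      using i2 l by (subst sum1_pat[OF l, of _ V2b]) auto
    finally show ?thesis .
  qed
  have s3: "integral\<^sup>L P (\<lambda>X. \<Sum>k<L. \<Sum>k'<L. F3 k k' X) = V3a + (real L - 1) * (V3b + V3b + V3d) + (real L - 1) * (real L - 2) * V3e"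
  proof -
    have "integral\<^sup>L P (\<lambda>X. \<Sum>k<L. \<Sum>k'<L. F3 k k' X) = (\<Sum>k<L. integral\<^sup>L P (\<lambda>X. \<Sum>k'<L. F3 k k' X))"
      by (rule Bochner_Integration.integral_sum) (intro Bochner_Integration.integrable_sum, use i3 in auto)
    also have "\<dots> = (\<Sum>k<L. \<Sum>k'<L. integral\<^sup>L P (F3 k k'))"
      by (intro sum.cong refl Bochner_Integration.integral_sum) (use i3 in auto)
    also have "\<dots> = V3a + (real L - 1) * (V3b + V3b + V3d) + (real L - 1) * (real L - 2) * V3e"
      using i3 l by (subst sum2_pat[OF l, of _ V3b V3b V3d V3e]) auto
    finally show ?thesis .
  qed
  have "integrable P (\<lambda>X. X l \<bullet> X l - (4 * lam / real L) * (\<Sum>k<L. F2 k X)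
      + (4 * lam\<^sup>2 / (real L)\<^sup>2) * (\<Sum>k<L. \<Sum>k'<L. F3 k k' X))"
    using i1 int2 int3 by auto
  moreover have "integral\<^sup>L P (\<lambda>X. X l \<bullet> X l - (4 * lam / real L) * (\<Sum>k<L. F2 k X)
      + (4 * lam\<^sup>2 / (real L)\<^sup>2) * (\<Sum>k<L. \<Sum>k'<L. F3 k k' X)) = RVf (real L) lam s m0 m1 u0 u1"
  proof -
    have "integral\<^sup>L P (\<lambda>X. X l \<bullet> X l - (4 * lam / real L) * (\<Sum>k<L. F2 k X)
      + (4 * lam\<^sup>2 / (real L)\<^sup>2) * (\<Sum>k<L. \<Sum>k'<L. F3 k k' X))
      = integral\<^sup>L P (\<lambda>X. X l \<bullet> X l) - (4 * lam / real L) * integral\<^sup>L P (\<lambda>X. \<Sum>k<L. F2 k X)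
      + (4 * lam\<^sup>2 / (real L)\<^sup>2) * integral\<^sup>L P (\<lambda>X. \<Sum>k<L. \<Sum>k'<L. F3 k k' X)"
      using i1 int2 int3 by simp
    also have "\<dots> = MN [] - (4 * lam / real L) * (V2a + (real L - 1) * V2b)
      + (4 * lam\<^sup>2 / (real L)\<^sup>2) * (V3a + (real L - 1) * (V3b + V3b + V3d) + (real L - 1) * (real L - 2) * V3e)"
      by (simp only: s2 s3 conjunct2[OF i1])
    also have "\<dots> = RVf (real L) lam s m0 m1 u0 u1"
      unfolding RVf_def Let_def V2a_def V2b_def V3a_def V3b_def V3d_def V3e_def by (simp only: mult_2[symmetric])
    finally show ?thesis .
  qed
  ultimately show ?thesis unfolding pw by simp
qed

lemma risk_eq:
  assumes L: "L \<ge> 1"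
  shows "risk L lam s m0 m1 u0 u1 = RVf (real L) lam s m0 m1 u0 u1"
  using risk_row L by (simp add: risk_def)

end

lemma gm_len_simp: "s > 0 \<Longrightarrow> gm s c (a # vs) = (a \<bullet> c) * gm s c vs + s\<^sup>2 * (\<Sum>t<length vs. (a \<bullet> vs!t) * gm s c (dl t vs))"
  by (rule gm_Cons)

lemma gm2: assumes s: "s > 0" shows "gm s c [a,b] = (a \<bullet> c) * (b \<bullet> c) + s\<^sup>2 * (a \<bullet> b)"
  using s by (simp add: gm_Cons numeral_eq_Suc inner_commute algebra_simps)

lemma gm3: assumes s: "s > 0" shows "gm s c [a,b,e] = (a \<bullet> c) * (b \<bullet> c) * (e \<bullet> c) + (a \<bullet> c) * s\<^sup>2 * (b \<bullet> e) + s\<^sup>2 * (a \<bullet> b) * (e \<bullet> c) + s\<^sup>2 * (a \<bullet> e) * (b \<bullet> c)"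
  using s by (simp add: gm_Cons numeral_eq_Suc inner_commute algebra_simps)

lemma gm4: assumes s: "s > 0" shows "gm s c [a,b,e,f] = (a \<bullet> c) * (b \<bullet> c) * (e \<bullet> c) * (f \<bullet> c) + (a \<bullet> c) * (b \<bullet> c) * s\<^sup>2 * (e \<bullet> f) + (a \<bullet> c) * s\<^sup>2 * (b \<bullet> e) * (f \<bullet> c) + (a \<bullet> c) * s\<^sup>2 * (b \<bullet> f) * (e \<bullet> c) + s\<^sup>2 * (a \<bullet> b) * (e \<bullet> c) * (f \<bullet> c) + s\<^sup>2 * (a \<bullet> b) * s\<^sup>2 * (e \<bullet> f) + s\<^sup>2 * (a \<bullet> e) * (b \<bullet> c) * (f \<bullet> c) + s\<^sup>2 * (a \<bullet> e) * s\<^sup>2 * (b \<bullet> f) + s\<^sup>2 * (a \<bullet> f) * (b \<bullet> c) * (e \<bullet> c) + s\<^sup>2 * (a \<bullet> f) * s\<^sup>2 * (b \<bullet> e)"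
  using s by (simp add: gm_Cons numeral_eq_Suc inner_commute algebra_simps)

lemma gm5: assumes s: "s > 0" shows "gm s c [a,b,e,f,g] = (a \<bullet> c) * (b \<bullet> c) * (e \<bullet> c) * (f \<bullet> c) * (g \<bullet> c) + (a \<bullet> c) * (b \<bullet> c) * (e \<bullet> c) * s\<^sup>2 * (f \<bullet> g) + (a \<bullet> c) * (b \<bullet> c) * s\<^sup>2 * (e \<bullet> f) * (g \<bullet> c) + (a \<bullet> c) * (b \<bullet> c) * s\<^sup>2 * (e \<bullet> g) * (f \<bullet> c) + (a \<bullet> c) * s\<^sup>2 * (b \<bullet> e) * (f \<bullet> c) * (g \<bullet> c) + (a \<bullet> c) * s\<^sup>2 * (b \<bullet> e) * s\<^sup>2 * (f \<bullet> g) + (a \<bullet> c) * s\<^sup>2 * (b \<bullet> f) * (e \<bullet> c) * (g \<bullet> c) + (a \<bullet> c) * s\<^sup>2 * (b \<bullet> f) * s\<^sup>2 * (e \<bullet> g) + (a \<bullet> c) * s\<^sup>2 * (b \<bullet> g) * (e \<bullet> c) * (f \<bullet> c) + (a \<bullet> c) * s\<^sup>2 * (b \<bullet> g) * s\<^sup>2 * (e \<bullet> f) + s\<^sup>2 * (a \<bullet> b) * (e \<bullet> c) * (f \<bullet> c) * (g \<bullet> c) + s\<^sup>2 * (a \<bullet> b) * (e \<bullet> c) * s\<^sup>2 * (f \<bullet> g) + s\<^sup>2 * (a \<bullet> b) * s\<^sup>2 * (e \<bullet> f) * (g \<bullet> c) + s\<^sup>2 * (a \<bullet> b) * s\<^sup>2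 * (e \<bullet> g) * (f \<bullet> c) + s\<^sup>2 * (a \<bullet> e) * (b \<bullet> c) * (f \<bullet> c) * (g \<bullet> c) + s\<^sup>2 * (a \<bullet> e) * (b \<bullet> c) * s\<^sup>2 * (f \<bullet> g) + s\<^sup>2 * (a \<bullet> e) * s\<^sup>2 * (b \<bullet> f) * (g \<bullet> c) + s\<^sup>2 * (a \<bullet> e) * s\<^sup>2 * (b \<bullet> g) * (f \<bullet> c) + s\<^sup>2 * (a \<bullet> f) * (b \<bullet> c) * (e \<bullet> c) * (g \<bullet> c) + s\<^sup>2 * (a \<bullet> f) * (b \<bullet> c) * s\<^sup>2 * (e \<bullet> g) + s\<^sup>2 * (a \<bullet> f) * s\<^sup>2 * (b \<bullet> e) * (g \<bullet> c) + s\<^sup>2 * (a \<bullet> f) * s\<^sup>2 * (b \<bullet> g) * (e \<bullet> c) + s\<^sup>2 * (a \<bullet> g) * (b \<bullet> c) * (e \<bullet> c) * (f \<bullet> c) + s\<^sup>2 * (a \<bullet> g) * (b \<bullet> c) * s\<^sup>2 * (e \<bullet> f) + s\<^sup>2 * (a \<bullet> g) * s\<^sup>2 * (b \<bullet> e) * (f \<bullet> c) + s\<^sup>2 * (a \<bullet> g) * s\<^sup>2 * (b \<bullet> f) * (e \<bullet> c)"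
  using s by (simp add: gm_Cons numeral_eq_Suc inner_commute algebra_simps)

definition PA :: "real \<Rightarrow> real \<Rightarrow> real \<Rightarrow> real \<Rightarrow> real \<Rightarrow> real \<Rightarrow> real \<Rightarrow> real \<Rightarrow> real" where
  "PA d LL s k1 a b c e = s ^ 2
      + s ^ 4
      + s ^ 4 * d
      + s ^ 4 * LL
      + (1 / 4) * k1 ^ 2
      + (1 / 4) * k1 ^ 2 * LL
      + k1 ^ 2 * s ^ 2
      + (1 / 2) * k1 ^ 2 * s ^ 2 * d
      + k1 ^ 2 * s ^ 2 * LL
      + (1 / 4) * c ^ 2
      + (1 / 4) * c ^ 2 * LL
      + c ^ 2 * s ^ 2
      + (1 / 2) * c ^ 2 * s ^ 2 * d
      + c ^ 2 * s ^ 2 * LL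
      + (1 / 4) * b ^ 2
      + (1 / 4) * b ^ 2 * LL
      + b ^ 2 * s ^ 2
      + (1 / 2) * b ^ 2 * s ^ 2 * d
      + b ^ 2 * s ^ 2 * LL
      + a * s ^ 2
      + a * s ^ 4
      + a * s ^ 4 * d
      + a * s ^ 4 * LL"

definition PB :: "real \<Rightarrow> real \<Rightarrow> real \<Rightarrow> real \<Rightarrow> real \<Rightarrow> real \<Rightarrow> real \<Rightarrow> real \<Rightarrow> real" where
  "PB d LL s k1 a b c e = 2 * s ^ 4
      + s ^ 4 * LL
      + 6 * s ^ 6
      + 2 * s ^ 6 * d
      + 5 * s ^ 6 * LL
      + s ^ 6 * LL * d
      + s ^ 6 * LL ^ 2
      + k1 ^ 2 * s ^ 2
      + (7 / 4) * k1 ^ 2 * s ^ 2 * LL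
      + (1 / 4) * k1 ^ 2 * s ^ 2 * LL ^ 2
      + 9 * k1 ^ 2 * s ^ 4
      + 2 * k1 ^ 2 * s ^ 4 * d
      + (15 / 2) * k1 ^ 2 * s ^ 4 * LL
      + k1 ^ 2 * s ^ 4 * LL * d
      + (3 / 2) * k1 ^ 2 * s ^ 4 * LL ^ 2
      + (3 / 8) * k1 ^ 4 * LL
      + (1 / 8) * k1 ^ 4 * LL ^ 2
      + (3 / 2) * k1 ^ 4 * s ^ 2
      + (1 / 4) * k1 ^ 4 * s ^ 2 * d
      + 2 * k1 ^ 4 * s ^ 2 * LL
      + (1 / 4) * k1 ^ 4 * s ^ 2 * LL * d
      + (1 / 2) * k1 ^ 4 * s ^ 2 * LL ^ 2
      + 2 * e ^ 2 * s ^ 4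
      + 2 * e ^ 2 * s ^ 4 * LL
      + 8 * e ^ 2 * s ^ 6
      + 2 * e ^ 2 * s ^ 6 * d
      + 6 * e ^ 2 * s ^ 6 * LL
      + 2 * e ^ 2 * s ^ 6 * LL * d
      + 2 * e ^ 2 * s ^ 6 * LL ^ 2
      + c * e * k1 * s ^ 2
      + (5 / 2) * c * e * k1 * s ^ 2 * LL
      + (1 / 2) * c * e * k1 * s ^ 2 * LL ^ 2
      + 12 * c * e * k1 * s ^ 4
      + 2 * c * e * k1 * s ^ 4 * d
      + 9 * c * e * k1 * s ^ 4 * LL
      + 2 * c * e * k1 * s ^ 4 * LL * d
      + 3 * c * e * k1 * s ^ 4 * LL ^ 2
      + (1 / 2) * c ^ 2 * s ^ 2
      + (1 / 2) * c ^ 2 * s ^ 2 * LL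
      + 3 * c ^ 2 * s ^ 4
      + c ^ 2 * s ^ 4 * d
      + 3 * c ^ 2 * s ^ 4 * LL
      + (3 / 4) * c ^ 2 * k1 ^ 2 * LL
      + (1 / 4) * c ^ 2 * k1 ^ 2 * LL ^ 2
      + 3 * c ^ 2 * k1 ^ 2 * s ^ 2
      + (1 / 2) * c ^ 2 * k1 ^ 2 * s ^ 2 * d
      + 4 * c ^ 2 * k1 ^ 2 * s ^ 2 * LL
      + (1 / 2) * c ^ 2 * k1 ^ 2 * s ^ 2 * LL * d
      + c ^ 2 * k1 ^ 2 * s ^ 2 * LL ^ 2
      + (3 / 8) * c ^ 4 * LL
      + (1 / 8) * c ^ 4 * LL ^ 2
      + (3 / 2) * c ^ 4 * s ^ 2
      + (1 / 4) * c ^ 4 * s ^ 2 * d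
      + 2 * c ^ 4 * s ^ 2 * LL
      + (1 / 4) * c ^ 4 * s ^ 2 * LL * d
      + (1 / 2) * c ^ 4 * s ^ 2 * LL ^ 2
      + (1 / 2) * b ^ 2 * s ^ 2
      + (1 / 2) * b ^ 2 * s ^ 2 * LL
      + 3 * b ^ 2 * s ^ 4
      + b ^ 2 * s ^ 4 * d
      + 3 * b ^ 2 * s ^ 4 * LL
      - b ^ 2 * k1 ^ 2 * s ^ 2
      + b ^ 2 * k1 ^ 2 * s ^ 2 * LL
      - (1 / 4) * b ^ 2 * c ^ 2 * LL
      + (1 / 4) * b ^ 2 * c ^ 2 * LL ^ 2
      - 3 * b ^ 2 * c ^ 2 * s ^ 2
      - (1 / 2) * b ^ 2 * c ^ 2 * s ^ 2 * d
      + 2 * b ^ 2 * c ^ 2 * s ^ 2 * LL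
      + (1 / 2) * b ^ 2 * c ^ 2 * s ^ 2 * LL * d
      + b ^ 2 * c ^ 2 * s ^ 2 * LL ^ 2
      + (3 / 8) * b ^ 4 * LL
      + (1 / 8) * b ^ 4 * LL ^ 2
      + (3 / 2) * b ^ 4 * s ^ 2
      + (1 / 4) * b ^ 4 * s ^ 2 * d
      + 2 * b ^ 4 * s ^ 2 * LL
      + (1 / 4) * b ^ 4 * s ^ 2 * LL * d
      + (1 / 2) * b ^ 4 * s ^ 2 * LL ^ 2
      + 2 * a * s ^ 4
      + 4 * a * s ^ 6
      + 2 * a * s ^ 6 * d
      + 4 * a * s ^ 6 * LL
      + (1 / 2) * a * k1 ^ 2 * s ^ 2
      + (1 / 2) * a * k1 ^ 2 * s ^ 2 * LL
      + 3 * a * k1 ^ 2 * s ^ 4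
      + a * k1 ^ 2 * s ^ 4 * d
      + 3 * a * k1 ^ 2 * s ^ 4 * LL
      + a * c ^ 2 * s ^ 2
      + (7 / 4) * a * c ^ 2 * s ^ 2 * LL
      + (1 / 4) * a * c ^ 2 * s ^ 2 * LL ^ 2
      + 9 * a * c ^ 2 * s ^ 4
      + 2 * a * c ^ 2 * s ^ 4 * d
      + (15 / 2) * a * c ^ 2 * s ^ 4 * LL
      + a * c ^ 2 * s ^ 4 * LL * d
      + (3 / 2) * a * c ^ 2 * s ^ 4 * LL ^ 2
      + a * b ^ 2 * s ^ 2
      + (7 / 4) * a * b ^ 2 * s ^ 2 * LL
      + (1 / 4) * a * b ^ 2 * s ^ 2 * LL ^ 2
      + 9 * a * b ^ 2 * s ^ 4
      + 2 * a * b ^ 2 * s ^ 4 * d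
      + (15 / 2) * a * b ^ 2 * s ^ 4 * LL
      + a * b ^ 2 * s ^ 4 * LL * d
      + (3 / 2) * a * b ^ 2 * s ^ 4 * LL ^ 2
      + 2 * a ^ 2 * s ^ 4
      + a ^ 2 * s ^ 4 * LL
      + 6 * a ^ 2 * s ^ 6
      + 2 * a ^ 2 * s ^ 6 * d
      + 5 * a ^ 2 * s ^ 6 * LL
      + a ^ 2 * s ^ 6 * LL * d
      + a ^ 2 * s ^ 6 * LL ^ 2"

context
  fixes m0 m1 u u1 :: "real^'d" and s :: real
  assumes s: "s > 0" and n0: "m0 \<bullet> m0 = 1" and n1: "m1 \<bullet> m1 = 1" and o01: "m0 \<bullet> m1 = 0"
    and nu1: "u1 \<bullet> u1 = 1" and o10: "u1 \<bullet> m0 = 0"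
begin

lemma o10': "m1 \<bullet> m0 = 0" using o01 by (simp add: inner_commute)
lemma o01': "m0 \<bullet> u1 = 0" using o10 by (simp add: inner_commute)
lemma e1: "gm s c [a] = a \<bullet> c" for c a :: "real^'d" using gm_Cons[OF s, of c a "[]"] s by simp

lemma lemN: "mmn s m0 m1 [] = 1 + s\<^sup>2 * real CARD('d)"
  unfolding mmn_def gmn_eq[OF s] using s n0 n1
  by (simp add: e1 algebra_simps)

lemma lemA: "(mmn s m0 m1 [u,u] + mmn s m0 m1 [u1,u1]) + (LL - 1) * (mm s m0 m1 [Sv s m0 m1 u, u] + mm s m0 m1 [Sv s m0 m1 u1, u1])
   = PA (real CARD('d)) LL s (u1 \<bullet> m1) (u \<bullet> u) (u \<bullet> m0) (u \<bullet> m1) (u \<bullet> u1)"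
  unfolding mm_def mmn_def gmn_eq[OF s]
  using s n0 n1 o01 o10 o10' o01' nu1
  by (simp add: numeral_eq_Suc gm2[OF s] gm3[OF s] gm4[OF s] gm5[OF s] e1 Sv_def PA_def
          inner_add_left inner_add_right inner_commute field_simps power2_eq_square)

lemma lemB: "(mmn s m0 m1 [u,u,u,u] + 2 * mmn s m0 m1 [u,u,u1,u1] + mmn s m0 m1 [u1,u1,u1,u1])
        + (LL - 1) * (2 * (mm s m0 m1 [Sv s m0 m1 u, u, u, u] + mm s m0 m1 [Sv s m0 m1 u, u1, u1, u] + mm s m0 m1 [Sv s m0 m1 u1, u, u, u1] + mm s m0 m1 [Sv s m0 m1 u1, u1, u1, u1])
                      + (mm s m0 m1 [u,u] * mmn s m0 m1 [u,u] + 2 * (mm s m0 m1 [u,u1] * mmn s m0 m1 [u,u1]) + mm s m0 m1 [u1,u1] * mmn s m0 m1 [u1,u1]))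
        + (LL - 1) * (LL - 2) * (mm s m0 m1 [u,u] * mm s m0 m1 [Sv s m0 m1 u, u] + mm s m0 m1 [u,u1] * mm s m0 m1 [Sv s m0 m1 u1, u] + mm s m0 m1 [u1,u] * mm s m0 m1 [Sv s m0 m1 u, u1] + mm s m0 m1 [u1,u1] * mm s m0 m1 [Sv s m0 m1 u1, u1])
   = PB (real CARD('d)) LL s (u1 \<bullet> m1) (u \<bullet> u) (u \<bullet> m0) (u \<bullet> m1) (u \<bullet> u1)"
  unfolding mm_def mmn_def gmn_eq[OF s]
  using s n0 n1 o01 o10 o10' o01' nu1
  by (simp add: numeral_eq_Suc gm2[OF s] gm3[OF s] gm4[OF s] gm5[OF s] e1 Sv_def PB_def
          inner_add_left inner_add_right inner_commute field_simps power2_eq_square)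

lemma RV_poly: "RVf LL lam s m0 m1 u u1 = 1 + s\<^sup>2 * real CARD('d)
     - (4 * lam / LL) * PA (real CARD('d)) LL s (u1 \<bullet> m1) (u \<bullet> u) (u \<bullet> m0) (u \<bullet> m1) (u \<bullet> u1)
     + (4 * lam\<^sup>2 / LL\<^sup>2) * PB (real CARD('d)) LL s (u1 \<bullet> m1) (u \<bullet> u) (u \<bullet> m0) (u \<bullet> m1) (u \<bullet> u1)"
  unfolding RVf_def Let_def lemN lemA[symmetric] lemB[symmetric] ..

end

definition PAa :: "real \<Rightarrow> real \<Rightarrow> real \<Rightarrow> real \<Rightarrow> real \<Rightarrow> real" where
  "PAa d LL s k1 b = s ^ 2 + s ^ 4 + s ^ 4 * d + s ^ 4 * LL"
definition PAb :: "real \<Rightarrow> real \<Rightarrow> real \<Rightarrow> real \<Rightarrow> real \<Rightarrow> real" where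
  "PAb d LL s k1 b = (1 / 2) * b + (1 / 2) * b * LL + 2 * b * s ^ 2 + b * s ^ 2 * d + 2 * b * s ^ 2 * LL"
definition PBa :: "real \<Rightarrow> real \<Rightarrow> real \<Rightarrow> real \<Rightarrow> real \<Rightarrow> real" where
  "PBa d LL s k1 b = 6 * s ^ 4 + 2 * s ^ 4 * LL + 16 * s ^ 6 + 6 * s ^ 6 * d + 14 * s ^ 6 * LL + 2 * s ^ 6 * LL * d + 2 * s ^ 6 * LL ^ 2 + (1 / 2) * k1 ^ 2 * s ^ 2 + (1 / 2) * k1 ^ 2 * s ^ 2 * LL + 3 * k1 ^ 2 * s ^ 4 + k1 ^ 2 * s ^ 4 * d + 3 * k1 ^ 2 * s ^ 4 * LL + b ^ 2 * s ^ 2 + (7 / 4) * b ^ 2 * s ^ 2 * LL + (1 / 4) * b ^ 2 * s ^ 2 * LL ^ 2 + 9 * b ^ 2 * s ^ 4 + 2 * b ^ 2 * s ^ 4 * d + (15 / 2) * b ^ 2 * s ^ 4 * LL + b ^ 2 * s ^ 4 * LL * d + (3 / 2) * b ^ 2 * s ^ 4 * LL ^ 2"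
definition PBb :: "real \<Rightarrow> real \<Rightarrow> real \<Rightarrow> real \<Rightarrow> real \<Rightarrow> real" where
  "PBb d LL s k1 b = 3 * b * s ^ 2 + (9 / 2) * b * s ^ 2 * LL + (1 / 2) * b * s ^ 2 * LL ^ 2 + 24 * b * s ^ 4 + 6 * b * s ^ 4 * d + 21 * b * s ^ 4 * LL + 2 * b * s ^ 4 * LL * d + 3 * b * s ^ 4 * LL ^ 2 - 2 * b * k1 ^ 2 * s ^ 2 + 2 * b * k1 ^ 2 * s ^ 2 * LL + (3 / 2) * b ^ 3 * LL + (1 / 2) * b ^ 3 * LL ^ 2 + 6 * b ^ 3 * s ^ 2 + b ^ 3 * s ^ 2 * d + 8 * b ^ 3 * s ^ 2 * LL + b ^ 3 * s ^ 2 * LL * d + 2 * b ^ 3 * s ^ 2 * LL ^ 2"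

context
  fixes m0 m1 u0 u1 :: "real^'d"
  assumes a0: "u0 \<bullet> u0 = 1" and c0: "u0 \<bullet> m1 = 0" and e0: "u0 \<bullet> u1 = 0"
begin

lemma PA_deriv:
  "((\<lambda>u. PA d LL s k1 (u \<bullet> u) (u \<bullet> m0) (u \<bullet> m1) (u \<bullet> u1)) has_derivative
     (\<lambda>h. PAa d LL s k1 (u0 \<bullet> m0) * (2 * (h \<bullet> u0)) + PAb d LL s k1 (u0 \<bullet> m0) * (h \<bullet> m0))) (at u0)"
  unfolding PA_def
  apply (rule derivative_eq_intros | simp)+
  apply (rule ext)
  using a0 c0 e0 by (simp add: PAa_def PAb_def inner_commute algebra_simps)

lemma PB_deriv:
  "((\<lambda>u. PB d LL s k1 (u \<bullet> u) (u \<bullet> m0) (u \<bullet> m1) (u \<bullet> u1)) has_derivative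
     (\<lambda>h. PBa d LL s k1 (u0 \<bullet> m0) * (2 * (h \<bullet> u0)) + PBb d LL s k1 (u0 \<bullet> m0) * (h \<bullet> m0))) (at u0)"
  unfolding PB_def
  apply (rule derivative_eq_intros | simp)+
  apply (rule ext)
  using a0 c0 e0 by (simp add: PBa_def PBb_def inner_commute algebra_simps)

lemma Rfun_gderiv:
  "GDERIV (\<lambda>u. 1 + s\<^sup>2 * d
     - p * PA d LL s k1 (u \<bullet> u) (u \<bullet> m0) (u \<bullet> m1) (u \<bullet> u1)
     + q * PB d LL s k1 (u \<bullet> u) (u \<bullet> m0) (u \<bullet> m1) (u \<bullet> u1)) u0 :>
   ((2 * (- p * PAa d LL s k1 (u0 \<bullet> m0) + q * PBa d LL s k1 (u0 \<bullet> m0))) *\<^sub>R u0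
    + (- p * PAb d LL s k1 (u0 \<bullet> m0) + q * PBb d LL s k1 (u0 \<bullet> m0)) *\<^sub>R m0)"
  unfolding gderiv_def
  apply (rule derivative_eq_intros PA_deriv PB_deriv | simp)+
  apply (rule ext)
  by (simp add: inner_add_right algebra_simps)

end

lemma grad_eqI:
  fixes f :: "'a::real_inner \<Rightarrow> real"
  assumes "GDERIV f x :> D" shows "grad f x = D"
proof -
  have ex: "GDERIV f x :> grad f x" unfolding grad_def using assms by (rule someI)
  have "(\<lambda>h. h \<bullet> grad f x) = (\<lambda>h. h \<bullet> D)"
    using ex assms unfolding gderiv_def by (rule has_derivative_unique)
  then have "(grad f x - D) \<bullet> grad f x = (grad f x - D) \<bullet> D" by metis
  then have "(grad f x - D) \<bullet> (grad f x - D) = 0" by (simp add: inner_diff_right)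
  then show ?thesis by simp
qed

lemma risk_lt_deriv:
  "deriv (\<lambda>t. risk_lt d LL lam s t k1) k0 = 4 * coefA d LL lam s * k0 ^ 3 + 2 * coefB d LL lam s * k0 + 2 * coefC d LL lam s * k0 * k1\<^sup>2"
proof (rule DERIV_imp_deriv)
  show "((\<lambda>t. risk_lt d LL lam s t k1) has_real_derivative
     (4 * coefA d LL lam s * k0 ^ 3 + 2 * coefB d LL lam s * k0 + 2 * coefC d LL lam s * k0 * k1\<^sup>2)) (at k0)"
    unfolding risk_lt_def
    by (rule derivative_eq_intros | simp)+
qed

lemma coefA_x: "LL \<noteq> 0 \<Longrightarrow> coefA d LL lam s = (lam/LL)\<^sup>2 * (2 * c2 d s 8 + 2 * (LL - 1) * c1 s 5 + (LL - 1) * c2 d s 4 + (LL - 1) * (LL - 2) / 2 * c1 s 4)"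
  by (simp add: coefA_def field_simps power2_eq_square)

lemma coefB_x: "LL \<noteq> 0 \<Longrightarrow> coefB d LL lam s = (lam/LL) * (- 2 * c2 d s 4 - (LL - 1) * c1 s 4)
   + (lam/LL)\<^sup>2 * (16 * s\<^sup>2 * c2 d s 6 + 8 * s\<^sup>2 * (LL - 1) * c1 s 6 + 4 * s\<^sup>2 * (LL - 1) * c2 d s 3 + s\<^sup>2 * (LL - 1) * (LL - 2) * c1 s 6)"
  by (simp add: coefB_def field_simps power2_eq_square)

lemma coefC_x: "LL \<noteq> 0 \<Longrightarrow> coefC d LL lam s = (lam/LL)\<^sup>2 * (4 * s\<^sup>2 * (LL - 1))"
  by (simp add: coefC_def field_simps power2_eq_square)

lemma beta_eq:
  assumes LL: "LL \<noteq> 0"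
  shows "- (4 * lam / LL) * PAb d LL s k1 k0 + (4 * lam\<^sup>2 / LL\<^sup>2) * PBb d LL s k1 k0
    = 4 * coefA d LL lam s * k0 ^ 3 + 2 * coefB d LL lam s * k0 + 2 * coefC d LL lam s * k0 * k1\<^sup>2"
proof -
  define x where "x = lam / LL"
  have e1: "4 * lam / LL = 4 * x" unfolding x_def by simp
  have e2: "4 * lam\<^sup>2 / LL\<^sup>2 = 4 * x\<^sup>2" unfolding x_def by (simp add: power_divide)
  show ?thesis
    unfolding e1 e2 coefA_x[OF LL] coefB_x[OF LL] coefC_x[OF LL] x_def[symmetric]
    by (simp add: PAb_def PBb_def c1_def c2_def algebra_simps power2_eq_square power3_eq_cube power4_eq_xxxx) (simp add: field_simps)
qed

lemma risk_eq_global: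
  assumes s: "s > 0" and L: "L \<ge> 1"
  shows "risk L lam s m0 m1 u0 u1 = RVf (real L) lam s m0 m1 u0 u1"
proof -
  interpret rku L s m0 m1 u0 u1 by unfold_locales (rule s)
  show ?thesis by (rule risk_eq[OF L])
qed

lemma risk_swap: "risk L lam s m0 m1 u0 u1 = risk L lam s m1 m0 u1 u0"
proof -
  have "mixture s m0 m1 = mixture s m1 m0" unfolding mixture_def by (simp add: add.commute)
  moreover have "Tlin L lam u0 u1 = Tlin L lam u1 u0" unfolding Tlin_def by (simp add: add.commute)
  ultimately show ?thesis unfolding risk_def data_law_def by simp
qed

lemma grad_risk:
  fixes m0 m1 u0 u1 :: "real^'d"
  assumes s: "s > 0" and L: "L \<ge> 1"
    and n0: "m0 \<bullet> m0 = 1" and n1: "m1 \<bullet> m1 = 1" and o01: "m0 \<bullet> m1 = 0"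
    and a0: "u0 \<bullet> u0 = 1" and c0: "u0 \<bullet> m1 = 0" and e0: "u0 \<bullet> u1 = 0"
    and nu1: "u1 \<bullet> u1 = 1" and o10: "u1 \<bullet> m0 = 0"
  shows "\<exists>\<alpha>. grad (\<lambda>u. risk L lam s m0 m1 u u1) u0 =
     \<alpha> *\<^sub>R u0 + deriv (\<lambda>t. risk_lt (real CARD('d)) (real L) lam s t (u1 \<bullet> m1)) (u0 \<bullet> m0) *\<^sub>R m0"
proof -
  define d where "d = real CARD('d)"
  define LL where "LL = real L"
  define k1 where "k1 = u1 \<bullet> m1"
  define p where "p = 4 * lam / LL"
  define q where "q = 4 * lam\<^sup>2 / LL\<^sup>2"
  have LL0: "LL \<noteq> 0" using L by (simp add: LL_def)
  have feq: "(\<lambda>u. risk L lam s m0 m1 u u1) = (\<lambda>u. 1 + s\<^sup>2 * d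
     - p * PA d LL s k1 (u \<bullet> u) (u \<bullet> m0) (u \<bullet> m1) (u \<bullet> u1)
     + q * PB d LL s k1 (u \<bullet> u) (u \<bullet> m0) (u \<bullet> m1) (u \<bullet> u1))"
    by (rule ext) (simp add: risk_eq_global[OF s L] RV_poly[OF s n0 n1 o01 nu1 o10] d_def LL_def k1_def p_def q_def)
  have G: "GDERIV (\<lambda>u. 1 + s\<^sup>2 * d
     - p * PA d LL s k1 (u \<bullet> u) (u \<bullet> m0) (u \<bullet> m1) (u \<bullet> u1)
     + q * PB d LL s k1 (u \<bullet> u) (u \<bullet> m0) (u \<bullet> m1) (u \<bullet> u1)) u0 :>
   ((2 * (- p * PAa d LL s k1 (u0 \<bullet> m0) + q * PBa d LL s k1 (u0 \<bullet> m0))) *\<^sub>R u0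
    + (- p * PAb d LL s k1 (u0 \<bullet> m0) + q * PBb d LL s k1 (u0 \<bullet> m0)) *\<^sub>R m0)"
    by (rule Rfun_gderiv[OF a0 c0 e0])
  have beta: "- p * PAb d LL s k1 (u0 \<bullet> m0) + q * PBb d LL s k1 (u0 \<bullet> m0)
      = deriv (\<lambda>t. risk_lt d LL lam s t k1) (u0 \<bullet> m0)"
    unfolding risk_lt_deriv p_def q_def using beta_eq[OF LL0] by simp
  have gr: "grad (\<lambda>u. risk L lam s m0 m1 u u1) u0 = (2 * (- p * PAa d LL s k1 (u0 \<bullet> m0) + q * PBa d LL s k1 (u0 \<bullet> m0))) *\<^sub>R u0
    + (- p * PAb d LL s k1 (u0 \<bullet> m0) + q * PBb d LL s k1 (u0 \<bullet> m0)) *\<^sub>R m0"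
    unfolding feq by (rule grad_eqI[OF G])
  show ?thesis
  proof (intro exI)
    show "grad (\<lambda>u. risk L lam s m0 m1 u u1) u0 = (2 * (- p * PAa d LL s k1 (u0 \<bullet> m0) + q * PBa d LL s k1 (u0 \<bullet> m0))) *\<^sub>R u0
      + deriv (\<lambda>t. risk_lt (real CARD('d)) (real L) lam s t (u1 \<bullet> m1)) (u0 \<bullet> m0) *\<^sub>R m0"
      unfolding gr beta by (simp add: d_def LL_def k1_def)
  qed
qed

lemma pgd_formula:
  fixes u m :: "real^'d"
  assumes uu: "u \<bullet> u = 1" and mm: "m \<bullet> m = 1"
  shows "pgd_step g u (\<alpha> *\<^sub>R u + \<beta> *\<^sub>R m) =
     (1 / sqrt (1 + g\<^sup>2 * \<beta>\<^sup>2 * (1 - (u \<bullet> m)\<^sup>2))) *\<^sub>R ((1 + g * \<beta> * (u \<bullet> m)) *\<^sub>R u - (g * \<beta>) *\<^sub>R m)"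
proof -
  define k where "k = u \<bullet> m"
  have mu: "m \<bullet> u = k" by (simp add: k_def inner_commute)
  have v: "u - g *\<^sub>R ((\<alpha> *\<^sub>R u + \<beta> *\<^sub>R m) - (u \<bullet> (\<alpha> *\<^sub>R u + \<beta> *\<^sub>R m)) *\<^sub>R u) = (1 + g * \<beta> * k) *\<^sub>R u - (g * \<beta>) *\<^sub>R m"
    using uu by (simp add: inner_add_right k_def algebra_simps scaleR_diff_right scaleR_add_left)
  have nv: "(norm ((1 + g * \<beta> * k) *\<^sub>R u - (g * \<beta>) *\<^sub>R m))\<^sup>2 = 1 + g\<^sup>2 * \<beta>\<^sup>2 * (1 - k\<^sup>2)"
    using uu mm mu by (simp only: power2_norm_eq_inner) (simp add: inner_diff_left inner_diff_right k_def algebra_simps power2_eq_square)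
  have "norm ((1 + g * \<beta> * k) *\<^sub>R u - (g * \<beta>) *\<^sub>R m) = sqrt (1 + g\<^sup>2 * \<beta>\<^sup>2 * (1 - k\<^sup>2))"
    using nv by (metis norm_ge_zero real_sqrt_abs abs_of_nonneg)
  then show ?thesis unfolding pgd_step_def Let_def v k_def by (simp add: divide_inverse_commute)
qed

lemma risk_lt_sym: "risk_lt d LL lam s a b = risk_lt d LL lam s b a"
  unfolding risk_lt_def by (simp add: algebra_simps)

lemma pgd_norm:
  fixes u m :: "real^'d"
  assumes uu: "u \<bullet> u = 1" and mm: "m \<bullet> m = 1"
  shows "((1 + g * \<beta> * (u \<bullet> m)) *\<^sub>R u - (g * \<beta>) *\<^sub>R m) \<bullet> ((1 + g * \<beta> * (u \<bullet> m)) *\<^sub>R u - (g * \<beta>) *\<^sub>R m)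
     = 1 + g\<^sup>2 * \<beta>\<^sup>2 * (1 - (u \<bullet> m)\<^sup>2)"
  using uu mm by (simp add: inner_diff_left inner_diff_right inner_commute algebra_simps power2_eq_square)

lemma step:
  fixes m0 m1 u0 u1 :: "real^'d" and lam g s :: real and L :: nat
  assumes s: "s > 0" and L: "L \<ge> 1"
    and n0: "m0 \<bullet> m0 = 1" and n1: "m1 \<bullet> m1 = 1" and o01: "m0 \<bullet> m1 = 0"
    and a0: "u0 \<bullet> u0 = 1" and c0: "u0 \<bullet> m1 = 0" and e0: "u0 \<bullet> u1 = 0"
    and nu1: "u1 \<bullet> u1 = 1" and o10: "u1 \<bullet> m0 = 0"
  defines "u0' \<equiv> pgd_step g u0 (grad (\<lambda>u. risk L lam s m0 m1 u u1) u0)"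
    and "u1' \<equiv> pgd_step g u1 (grad (\<lambda>u. risk L lam s m0 m1 u0 u) u1)"
  shows "u0' \<bullet> u0' = 1 \<and> u0' \<bullet> m1 = 0 \<and> u0' \<bullet> u1' = 0 \<and> u1' \<bullet> u1' = 1 \<and> u1' \<bullet> m0 = 0 \<and>
         (u0' \<bullet> m0, u1' \<bullet> m1) = phi (real CARD('d)) (real L) lam s g (u0 \<bullet> m0, u1 \<bullet> m1)"
proof -
  define d where "d = real CARD('d)"
  define k0 where "k0 = u0 \<bullet> m0"
  define k1 where "k1 = u1 \<bullet> m1"
  define b0 where "b0 = deriv (\<lambda>t. risk_lt d (real L) lam s t k1) k0"
  define b1 where "b1 = deriv (\<lambda>t. risk_lt d (real L) lam s t k0) k1"
  have o10': "m1 \<bullet> m0 = 0" using o01 by (simp add: inner_commute)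
  obtain \<alpha>0 where D0: "grad (\<lambda>u. risk L lam s m0 m1 u u1) u0 = \<alpha>0 *\<^sub>R u0 + b0 *\<^sub>R m0"
    using grad_risk[OF s L n0 n1 o01 a0 c0 e0 nu1 o10] unfolding b0_def d_def k0_def k1_def by blast
  have sw: "(\<lambda>u. risk L lam s m0 m1 u0 u) = (\<lambda>u. risk L lam s m1 m0 u u0)"
    by (rule ext) (rule risk_swap)
  have e0': "u1 \<bullet> u0 = 0" using e0 by (simp add: inner_commute)
  obtain \<alpha>1 where D1: "grad (\<lambda>u. risk L lam s m0 m1 u0 u) u1 = \<alpha>1 *\<^sub>R u1 + b1 *\<^sub>R m1"
    using grad_risk[OF s L n1 n0 o10' nu1 o10 e0' a0 c0] unfolding sw b1_def d_def k0_def k1_def by blast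
  define N0 where "N0 = 1 + g\<^sup>2 * b0\<^sup>2 * (1 - k0\<^sup>2)"
  define N1 where "N1 = 1 + g\<^sup>2 * b1\<^sup>2 * (1 - k1\<^sup>2)"
  have k0le: "k0\<^sup>2 \<le> 1"
  proof -
    have "\<bar>u0 \<bullet> m0\<bar> \<le> norm u0 * norm m0" by (rule Cauchy_Schwarz_ineq2)
    moreover have "norm u0 = 1" "norm m0 = 1" using a0 n0 by (simp_all add: norm_eq_1)
    ultimately show ?thesis unfolding k0_def abs_square_le_1 by simp
  qed
  have k1le: "k1\<^sup>2 \<le> 1"
  proof -
    have "\<bar>u1 \<bullet> m1\<bar> \<le> norm u1 * norm m1" by (rule Cauchy_Schwarz_ineq2)
    moreover have "norm u1 = 1" "norm m1 = 1" using nu1 n1 by (simp_all add: norm_eq_1)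
    ultimately show ?thesis unfolding k1_def abs_square_le_1 by simp
  qed
  have N0pos: "N0 > 0" unfolding N0_def using k0le by (simp add: add_pos_nonneg)
  have N1pos: "N1 > 0" unfolding N1_def using k1le by (simp add: add_pos_nonneg)
  define v0 where "v0 = (1 + g * b0 * k0) *\<^sub>R u0 - (g * b0) *\<^sub>R m0"
  define v1 where "v1 = (1 + g * b1 * k1) *\<^sub>R u1 - (g * b1) *\<^sub>R m1"
  have U0: "u0' = (1 / sqrt N0) *\<^sub>R v0"
    unfolding u0'_def D0 pgd_formula[OF a0 n0] N0_def v0_def k0_def ..
  have U1: "u1' = (1 / sqrt N1) *\<^sub>R v1"
    unfolding u1'_def D1 pgd_formula[OF nu1 n1] N1_def v1_def k1_def ..
  have vv0: "v0 \<bullet> v0 = N0" unfolding v0_def N0_def k0_def by (rule pgd_norm[OF a0 n0])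
  have vv1: "v1 \<bullet> v1 = N1" unfolding v1_def N1_def k1_def by (rule pgd_norm[OF nu1 n1])
  have sq0: "(1 / sqrt N0) * (1 / sqrt N0) * N0 = 1" using N0pos by (simp add: field_simps)
  have sq1: "(1 / sqrt N1) * (1 / sqrt N1) * N1 = 1" using N1pos by (simp add: field_simps)
  have m0u0: "m0 \<bullet> u0 = k0" unfolding k0_def by (simp add: inner_commute)
  have m1u1: "m1 \<bullet> u1 = k1" unfolding k1_def by (simp add: inner_commute)
  have r1: "u0' \<bullet> u0' = 1" unfolding U0 using vv0 sq0 by (simp add: algebra_simps)
  have r2: "u0' \<bullet> m1 = 0" unfolding U0 v0_def using c0 n1 o01 by (simp add: inner_diff_left)
  have r3: "u0' \<bullet> u1' = 0" unfolding U0 U1 v0_def v1_def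
    using e0 c0 o01 o10 by (simp add: inner_diff_left inner_diff_right inner_commute)
  have r4: "u1' \<bullet> u1' = 1" unfolding U1 using vv1 sq1 by (simp add: algebra_simps)
  have r5: "u1' \<bullet> m0 = 0" unfolding U1 v1_def using o10 o10' by (simp add: inner_diff_left)
  have p1eq: "deriv (\<lambda>t. risk_lt d (real L) lam s k0 t) k1 = b1"
    unfolding b1_def by (simp add: risk_lt_sym[of d _ lam s k0])
  have r6: "(u0' \<bullet> m0, u1' \<bullet> m1) = phi d (real L) lam s g (k0, k1)"
  proof -
    have f0a: "u0' \<bullet> m0 = (1 / sqrt N0) * ((1 + g * b0 * k0) * k0 - g * b0)"
      unfolding U0 v0_def using n0 by (simp add: inner_diff_left k0_def)
    have f0b: "(1 + g * b0 * k0) * k0 - g * b0 = k0 - g * b0 * (1 - k0\<^sup>2)"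
      by (simp add: algebra_simps power2_eq_square)
    have f0: "u0' \<bullet> m0 = (k0 - g * b0 * (1 - k0\<^sup>2)) / sqrt N0"
      unfolding f0a f0b by simp
    have f1a: "u1' \<bullet> m1 = (1 / sqrt N1) * ((1 + g * b1 * k1) * k1 - g * b1)"
      unfolding U1 v1_def using n1 by (simp add: inner_diff_left k1_def)
    have f1b: "(1 + g * b1 * k1) * k1 - g * b1 = k1 - g * b1 * (1 - k1\<^sup>2)"
      by (simp add: algebra_simps power2_eq_square)
    have f1: "u1' \<bullet> m1 = (k1 - g * b1 * (1 - k1\<^sup>2)) / sqrt N1"
      unfolding f1a f1b by simp
    have b0eq: "deriv (\<lambda>t. risk_lt d (real L) lam s t k1) k0 = b0" unfolding b0_def ..
    show ?thesis unfolding phi_def Let_def f0 f1 N0_def N1_def by (simp only: p1eq b0eq prod.case)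
  qed
  show ?thesis using r1 r2 r3 r4 r5 r6 by (simp add: d_def k0_def k1_def)
qed

theorem lemma5:
  fixes ms0 ms1 :: "real^'d"
    and L :: nat and s lam g :: real
    and mu0 mu1 :: "nat \<Rightarrow> real^'d"
  assumes d2: "CARD('d) \<ge> 2"
    and L2: "L \<ge> 2"
    and s_pos: "s > 0" and lam_pos: "lam > 0" and g_pos: "g > 0"
    and ms0: "norm ms0 = 1" and ms1: "norm ms1 = 1" and ms_orth: "ms0 \<bullet> ms1 = 0"
    and init: "norm (mu0 0) = 1" "norm (mu1 0) = 1"
      "ms1 \<bullet> mu0 0 = 0" "ms0 \<bullet> mu1 0 = 0" "mu0 0 \<bullet> mu1 0 = 0"
    and iter0: "\<And>k. mu0 (Suc k) =
        pgd_step g (mu0 k) (grad (\<lambda>u. risk L lam s ms0 ms1 u (mu1 k)) (mu0 k))"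
    and iter1: "\<And>k. mu1 (Suc k) =
        pgd_step g (mu1 k) (grad (\<lambda>u. risk L lam s ms0 ms1 (mu0 k) u) (mu1 k))"
  shows "\<forall>k. (mu0 (Suc k) \<bullet> ms0, mu1 (Suc k) \<bullet> ms1) =
           phi (real CARD('d)) (real L) lam s g (mu0 k \<bullet> ms0, mu1 k \<bullet> ms1)"
proof -
  have n0: "ms0 \<bullet> ms0 = 1" using ms0 by (simp add: norm_eq_1)
  have n1: "ms1 \<bullet> ms1 = 1" using ms1 by (simp add: norm_eq_1)
  have L1: "L \<ge> 1" using L2 by simp
  define I where "I k \<longleftrightarrow> mu0 k \<bullet> mu0 k = 1 \<and> mu0 k \<bullet> ms1 = 0 \<and> mu0 k \<bullet> mu1 k = 0 \<and> mu1 k \<bullet> mu1 k = 1 \<and> mu1 k \<bullet> ms0 = 0" for k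
  have st: "I (Suc k) \<and> (mu0 (Suc k) \<bullet> ms0, mu1 (Suc k) \<bullet> ms1) =
           phi (real CARD('d)) (real L) lam s g (mu0 k \<bullet> ms0, mu1 k \<bullet> ms1)" if Ik: "I k" for k
  proof -
    have h: "mu0 k \<bullet> mu0 k = 1" "mu0 k \<bullet> ms1 = 0" "mu0 k \<bullet> mu1 k = 0" "mu1 k \<bullet> mu1 k = 1" "mu1 k \<bullet> ms0 = 0"
      using Ik unfolding I_def by auto
    show ?thesis
      using step[OF s_pos L1 n0 n1 ms_orth h, of g lam] unfolding I_def iter0[of k] iter1[of k] by simp
  qed
  have Ik: "I k" for k
  proof (induction k)
    case 0
    show ?case unfolding I_def using init by (simp add: norm_eq_1 inner_commute)
  next
    case (Suc k)
    then show ?case using st by blast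
  qed
  show ?thesis using st Ik by blast
qed

end
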